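(* The cartesian product induces an injective ring homomorphism $$\mathrm{B}(\mathbb{Z})\otimes\mathrm{B}(\mathcal{Q})\longrightarrow\mathrm{B}(\mathcal{R}),\qquad [(X,\pi)]\otimes b(Q)\longmapsto b((X,\pi)\times Q),$$ where $(X,\pi)$ is regarded as a permutation rack.
   Context: A rack is a set $R$ with a binary operation $\rhd$ such that every left multiplication $\ell_a\colon b\mapsto a\rhd b$ is a bijection and $a\rhd(b\rhd c)=(a\rhd b)\rhd(a\rhd c)$ for all $a,b,c$; a quandle is a rack with $a\rhd a=a$ for all $a$. A permutation rack $(X,\pi)$ is a set $X$ with permutation $\pi$ and $a\rhd b=\pi(b)$. Products of racks are cartesian products with componentwise operation. A subrack is a subset $S$ with $\ell_s(S)=S$ for all $s\in S$; a decomposition of $R$ into $S$ and $T$ means $S,T$ are disjoint subracks (possibly empty) with $S\cup T=R$. The Burnside ring of finite racks $\mathrm{B}(\mathcal{R})$ is the abelian group generated by symbols $b(R)$, one for each finite rack $R$, subject to $b(R_1)=b(R_2)$ whenever $R_1\cong R_2$ and $b(R)=b(S)+b(T)$ whenever $R$ decomposes into $S$ and $T$, with ring structure $b(R)b(R')=b(R\times R')$; the Burnside ring of finite quandles $\mathrm{B}(\mathcal{Q})$ is defined in the same way using finite quandles. $\mathrm{B}(\mathbb{Z})$ is the Grothendieck ring of isomorphism classes of pairs $(X,\pi)$, $X$ a finite set and $\pi$ a permutation of $X$, with addition from disjoint union and multiplication from cartesian product. *)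

theory Defs
  imports Main "HOL-Library.Nat_Bijection"
begin

text \<open>Finite racks / quandles are represented with carrier a subset of nat
  (every finite rack is isomorphic to one of these); the operation is a function
  on nat whose values outside the carrier are irrelevant (they are identified by
  the isomorphism relations).  Finite Z-sets (X,pi) likewise.\<close>

type_synonym rk = "nat set \<times> (nat \<Rightarrow> nat \<Rightarrow> nat)"
type_synonym zs = "nat set \<times> (nat \<Rightarrow> nat)"

definition is_rack :: "rk \<Rightarrow> bool" where
  "is_rack R \<longleftrightarrow>
     (\<forall>a\<in>fst R. bij_betw (snd R a) (fst R) (fst R)) \<and>
     (\<forall>a\<in>fst R. \<forall>b\<in>fst R. \<forall>c\<in>fst R.
        snd R a (snd R b c) = snd R (snd R a b) (snd R a c))"

definition is_quandle :: "rk \<Rightarrow> bool" where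
  "is_quandle R \<longleftrightarrow> is_rack R \<and> (\<forall>a\<in>fst R. snd R a a = a)"

definition finite_rack :: "rk \<Rightarrow> bool" where
  "finite_rack R \<longleftrightarrow> is_rack R \<and> finite (fst R)"

definition finite_quandle :: "rk \<Rightarrow> bool" where
  "finite_quandle R \<longleftrightarrow> is_quandle R \<and> finite (fst R)"

definition rack_iso :: "rk \<Rightarrow> rk \<Rightarrow> bool" where
  "rack_iso R R' \<longleftrightarrow> (\<exists>f. bij_betw f (fst R) (fst R') \<and>
     (\<forall>a\<in>fst R. \<forall>b\<in>fst R. f (snd R a b) = snd R' (f a) (f b)))"

definition is_subrack :: "nat set \<Rightarrow> rk \<Rightarrow> bool" where
  "is_subrack S R \<longleftrightarrow> S \<subseteq> fst R \<and> (\<forall>s\<in>S. snd R s ` S = S)"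

definition rack_decomp :: "rk \<Rightarrow> nat set \<Rightarrow> nat set \<Rightarrow> bool" where
  "rack_decomp R S T \<longleftrightarrow> is_subrack S R \<and> is_subrack T R \<and> S \<inter> T = {} \<and> S \<union> T = fst R"

definition is_zset :: "zs \<Rightarrow> bool" where
  "is_zset X \<longleftrightarrow> finite (fst X) \<and> bij_betw (snd X) (fst X) (fst X)"

definition zset_iso :: "zs \<Rightarrow> zs \<Rightarrow> bool" where
  "zset_iso X Y \<longleftrightarrow> (\<exists>f. bij_betw f (fst X) (fst Y) \<and>
     (\<forall>a\<in>fst X. f (snd X a) = snd Y (f a)))"

definition zset_decomp :: "zs \<Rightarrow> nat set \<Rightarrow> nat set \<Rightarrow> bool" where
  "zset_decomp X S T \<longleftrightarrow> snd X ` S = S \<and> snd X ` T = T \<and> S \<inter> T = {} \<and> S \<union> T = fst X"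

text \<open>Formal Z-linear combinations (finitely supported functions to int).\<close>

definition gen :: "'a \<Rightarrow> 'a \<Rightarrow> int" where
  "gen x = (\<lambda>y. if y = x then 1 else 0)"

definition FS :: "'a set \<Rightarrow> ('a \<Rightarrow> int) set" where
  "FS G = {c. finite {x. c x \<noteq> 0} \<and> (\<forall>x. c x \<noteq> 0 \<longrightarrow> x \<in> G)}"

inductive_set zspan :: "('a \<Rightarrow> int) set \<Rightarrow> ('a \<Rightarrow> int) set" for R where
  zero: "(\<lambda>_. 0) \<in> zspan R"
| step: "r \<in> R \<Longrightarrow> c \<in> zspan R \<Longrightarrow> (\<lambda>x. c x + k * r x) \<in> zspan R"

definition linext :: "('a \<Rightarrow> 'b) \<Rightarrow> ('a \<Rightarrow> int) \<Rightarrow> 'b \<Rightarrow> int" where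
  "linext \<phi> c = (\<lambda>y. \<Sum>x | c x \<noteq> 0 \<and> \<phi> x = y. c x)"

definition conv :: "('a \<Rightarrow> 'a \<Rightarrow> 'a) \<Rightarrow> ('a \<Rightarrow> int) \<Rightarrow> ('a \<Rightarrow> int) \<Rightarrow> 'a \<Rightarrow> int" where
  "conv m f g = linext (\<lambda>(a, b). m a b) (\<lambda>(a, b). f a * g b)"

text \<open>Defining relations of B(R), B(Q), B(Z).\<close>

definition rack_rels :: "(rk \<Rightarrow> int) set" where
  "rack_rels =
     {(\<lambda>x. gen R1 x - gen R2 x) | R1 R2. finite_rack R1 \<and> finite_rack R2 \<and> rack_iso R1 R2}
   \<union> {(\<lambda>x. gen R x - gen (S, snd R) x - gen (T, snd R) x) | R S T.
        finite_rack R \<and> rack_decomp R S T}"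

definition quandle_rels :: "(rk \<Rightarrow> int) set" where
  "quandle_rels =
     {(\<lambda>x. gen R1 x - gen R2 x) | R1 R2. finite_quandle R1 \<and> finite_quandle R2 \<and> rack_iso R1 R2}
   \<union> {(\<lambda>x. gen R x - gen (S, snd R) x - gen (T, snd R) x) | R S T.
        finite_quandle R \<and> rack_decomp R S T}"

definition zset_rels :: "(zs \<Rightarrow> int) set" where
  "zset_rels =
     {(\<lambda>x. gen X1 x - gen X2 x) | X1 X2. is_zset X1 \<and> is_zset X2 \<and> zset_iso X1 X2}
   \<union> {(\<lambda>x. gen X x - gen (S, snd X) x - gen (T, snd X) x) | X S T.
        is_zset X \<and> zset_decomp X S T}"

text \<open>Tensor product B(Z) \<otimes> B(Q) of the presented groups: free on pairs of
  generators modulo relation \<otimes> generator and generator \<otimes> relation.\<close>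

definition tensor_rels :: "(zs \<times> rk \<Rightarrow> int) set" where
  "tensor_rels =
     {(\<lambda>(X, Q). if Q = Q0 then r X else 0) | r Q0. r \<in> zset_rels \<and> finite_quandle Q0}
   \<union> {(\<lambda>(X, Q). if X = X0 then s Q else 0) | X0 s. is_zset X0 \<and> s \<in> quandle_rels}"

definition tensor_gens :: "(zs \<times> rk) set" where
  "tensor_gens = {(X, Q). is_zset X \<and> finite_quandle Q}"

definition rack_prod :: "rk \<Rightarrow> rk \<Rightarrow> rk" where
  "rack_prod R R' =
     ({prod_encode (a, b) | a b. a \<in> fst R \<and> b \<in> fst R'},
      \<lambda>u v. prod_encode (snd R (fst (prod_decode u)) (fst (prod_decode v)),
                          snd R' (snd (prod_decode u)) (snd (prod_decode v))))"

definition zset_prod :: "zs \<Rightarrow> zs \<Rightarrow> zs" where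
  "zset_prod X Y =
     ({prod_encode (a, b) | a b. a \<in> fst X \<and> b \<in> fst Y},
      \<lambda>u. prod_encode (snd X (fst (prod_decode u)), snd Y (snd (prod_decode u))))"

definition perm_rack :: "zs \<Rightarrow> rk" where
  "perm_rack X = (fst X, \<lambda>a b. snd X b)"

definition rack_one :: rk where "rack_one = ({0}, \<lambda>_ _. 0)"
definition zset_one :: zs where "zset_one = ({0}, \<lambda>_. 0)"

definition tensor_mult :: "zs \<times> rk \<Rightarrow> zs \<times> rk \<Rightarrow> zs \<times> rk" where
  "tensor_mult p q = (zset_prod (fst p) (fst q), rack_prod (snd p) (snd q))"

definition burnside_map :: "(zs \<times> rk \<Rightarrow> int) \<Rightarrow> rk \<Rightarrow> int" where
  "burnside_map = linext (\<lambda>(X, Q). rack_prod (perm_rack X) Q)"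

end

theory Submission
  imports Defs
begin


definition fsupp :: "('a \<Rightarrow> int) \<Rightarrow> 'a set" where "fsupp f = {x. f x \<noteq> 0}"
definition fin :: "('a \<Rightarrow> int) \<Rightarrow> bool" where "fin f \<longleftrightarrow> finite (fsupp f)"

lemma gen_simp: "gen a y = (if y = a then 1 else 0)" by (simp add: gen_def)

lemma sum_gen: "finite S \<Longrightarrow> (\<Sum>q\<in>S. h q * gen q p) = (if p \<in> S then h p else 0)"
  by (simp add: gen_def if_distrib[where f="\<lambda>z. _ * z"] cong: if_cong)

lemma fin_zero[simp]: "fin (\<lambda>_. 0)" by (simp add: fin_def fsupp_def)
lemma fin_gen[simp]: "fin (gen a)" by (simp add: fin_def fsupp_def gen_def)
lemma fin_add[simp]: "fin f \<Longrightarrow> fin g \<Longrightarrow> fin (\<lambda>x. f x + g x)"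
  unfolding fin_def fsupp_def by (rule finite_subset[of _ "{x. f x \<noteq> 0} \<union> {x. g x \<noteq> 0}"]) auto
lemma fin_diff[simp]: "fin f \<Longrightarrow> fin g \<Longrightarrow> fin (\<lambda>x. f x - g x)"
  unfolding fin_def fsupp_def by (rule finite_subset[of _ "{x. f x \<noteq> 0} \<union> {x. g x \<noteq> 0}"]) auto
lemma fin_smult[simp]: "fin f \<Longrightarrow> fin (\<lambda>x. k * f x)"
  unfolding fin_def fsupp_def by (rule finite_subset[of _ "{x. f x \<noteq> 0}"]) auto
lemma fin_sum[simp]: "finite A \<Longrightarrow> fin (\<lambda>y. \<Sum>x\<in>A. a x * gen (\<phi> x) y)"
  unfolding fin_def fsupp_def
proof (rule finite_subset[of _ "\<phi> ` A"])
  show "{y. (\<Sum>x\<in>A. a x * gen (\<phi> x) y) \<noteq> 0} \<subseteq> \<phi> ` A"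
  proof
    fix y assume "y \<in> {y. (\<Sum>x\<in>A. a x * gen (\<phi> x) y) \<noteq> 0}"
    then have "(\<Sum>x\<in>A. a x * gen (\<phi> x) y) \<noteq> 0" by simp
    then obtain x where "x \<in> A" "a x * gen (\<phi> x) y \<noteq> 0" by (rule sum.not_neutral_contains_not_neutral)
    then show "y \<in> \<phi> ` A" by (auto simp: gen_def split: if_splits)
  qed
qed auto

lemma linext_eq:
  assumes "finite A" "fsupp f \<subseteq> A"
  shows "linext \<phi> f y = (\<Sum>x\<in>A. f x * gen (\<phi> x) y)"
proof -
  have "linext \<phi> f y = (\<Sum>x | f x \<noteq> 0 \<and> \<phi> x = y. f x)" by (simp add: linext_def)
  also have "\<dots> = (\<Sum>x\<in>A \<inter> {x. \<phi> x = y}. f x)"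
  proof (rule sum.mono_neutral_left)
    show "finite (A \<inter> {x. \<phi> x = y})" using assms(1) by simp
    show "{x. f x \<noteq> 0 \<and> \<phi> x = y} \<subseteq> A \<inter> {x. \<phi> x = y}" using assms(2) by (auto simp: fsupp_def)
    show "\<forall>i\<in>A \<inter> {x. \<phi> x = y} - {x. f x \<noteq> 0 \<and> \<phi> x = y}. f i = 0" by auto
  qed
  also have "\<dots> = (\<Sum>x\<in>A. if x \<in> {x. \<phi> x = y} then f x else 0)"
    by (rule sum.inter_restrict[OF assms(1)])
  also have "\<dots> = (\<Sum>x\<in>A. f x * gen (\<phi> x) y)"
    by (rule sum.cong) (auto simp: gen_def)
  finally show ?thesis .
qed

lemma linext_add: "fin f \<Longrightarrow> fin g \<Longrightarrow> linext \<phi> (\<lambda>x. f x + g x) = (\<lambda>y. linext \<phi> f y + linext \<phi> g y)"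
proof
  fix y assume "fin f" "fin g"
  let ?A = "fsupp f \<union> fsupp g"
  have A: "finite ?A" using \<open>fin f\<close> \<open>fin g\<close> by (simp add: fin_def)
  have 1: "linext \<phi> (\<lambda>x. f x + g x) y = (\<Sum>x\<in>?A. (f x + g x) * gen (\<phi> x) y)"
    by (rule linext_eq[OF A]) (auto simp: fsupp_def)
  have 2: "linext \<phi> f y = (\<Sum>x\<in>?A. f x * gen (\<phi> x) y)"
    by (rule linext_eq[OF A]) (auto simp: fsupp_def)
  have 3: "linext \<phi> g y = (\<Sum>x\<in>?A. g x * gen (\<phi> x) y)"
    by (rule linext_eq[OF A]) (auto simp: fsupp_def)
  show "linext \<phi> (\<lambda>x. f x + g x) y = linext \<phi> f y + linext \<phi> g y"
    unfolding 1 2 3 by (simp add: sum.distrib distrib_right)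
qed

lemma linext_diff: "fin f \<Longrightarrow> fin g \<Longrightarrow> linext \<phi> (\<lambda>x. f x - g x) = (\<lambda>y. linext \<phi> f y - linext \<phi> g y)"
proof
  fix y assume "fin f" "fin g"
  let ?A = "fsupp f \<union> fsupp g"
  have A: "finite ?A" using \<open>fin f\<close> \<open>fin g\<close> by (simp add: fin_def)
  have 1: "linext \<phi> (\<lambda>x. f x - g x) y = (\<Sum>x\<in>?A. (f x - g x) * gen (\<phi> x) y)"
    by (rule linext_eq[OF A]) (auto simp: fsupp_def)
  have 2: "linext \<phi> f y = (\<Sum>x\<in>?A. f x * gen (\<phi> x) y)"
    by (rule linext_eq[OF A]) (auto simp: fsupp_def)
  have 3: "linext \<phi> g y = (\<Sum>x\<in>?A. g x * gen (\<phi> x) y)"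
    by (rule linext_eq[OF A]) (auto simp: fsupp_def)
  show "linext \<phi> (\<lambda>x. f x - g x) y = linext \<phi> f y - linext \<phi> g y"
    unfolding 1 2 3 by (simp add: sum_subtractf left_diff_distrib)
qed

lemma linext_smult: "fin f \<Longrightarrow> linext \<phi> (\<lambda>x. k * f x) = (\<lambda>y. k * linext \<phi> f y)"
proof
  fix y assume "fin f"
  have A: "finite (fsupp f)" using \<open>fin f\<close> by (simp add: fin_def)
  have 1: "linext \<phi> (\<lambda>x. k * f x) y = (\<Sum>x\<in>fsupp f. (k * f x) * gen (\<phi> x) y)"
    by (rule linext_eq[OF A]) (auto simp: fsupp_def)
  have 2: "linext \<phi> f y = (\<Sum>x\<in>fsupp f. f x * gen (\<phi> x) y)"
    by (rule linext_eq[OF A]) (auto simp: fsupp_def)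
  show "linext \<phi> (\<lambda>x. k * f x) y = k * linext \<phi> f y"
    unfolding 1 2 by (simp add: sum_distrib_left mult.assoc)
qed

lemma linext_gen: "linext \<phi> (gen a) = gen (\<phi> a)"
proof
  fix y
  show "linext \<phi> (gen a) y = gen (\<phi> a) y"
    by (subst linext_eq[of "{a}"]) (auto simp: fsupp_def gen_def)
qed

lemma linext_zero: "linext \<phi> (\<lambda>_. 0) = (\<lambda>_. 0)"
  by (rule ext, subst linext_eq[of "{}"]) (auto simp: fsupp_def)

lemma linext_sum: "finite A \<Longrightarrow> linext \<psi> (\<lambda>y. \<Sum>x\<in>A. a x * gen (\<phi> x) y) = (\<lambda>z. \<Sum>x\<in>A. a x * gen (\<psi> (\<phi> x)) z)"
proof (induction A rule: finite_induct)
  case empty then show ?case by (simp add: linext_zero)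
next
  case (insert x F)
  have "linext \<psi> (\<lambda>y. \<Sum>x\<in>insert x F. a x * gen (\<phi> x) y)
     = linext \<psi> (\<lambda>y. a x * gen (\<phi> x) y + (\<Sum>x\<in>F. a x * gen (\<phi> x) y))"
    using insert by simp
  also have "\<dots> = (\<lambda>z. a x * gen (\<psi> (\<phi> x)) z + (\<Sum>x\<in>F. a x * gen (\<psi> (\<phi> x)) z))"
    using insert by (simp add: linext_add linext_smult linext_gen)
  finally show ?case using insert by simp
qed

lemma fin_repr: "fin f \<Longrightarrow> f = (\<lambda>y. \<Sum>x\<in>fsupp f. f x * gen x y)"
  by (rule ext) (simp add: sum_gen fin_def fsupp_def)

lemma zspan_add: "b \<in> zspan R \<Longrightarrow> a \<in> zspan R \<Longrightarrow> (\<lambda>x. a x + b x) \<in> zspan R"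
proof (induction b rule: zspan.induct)
  case zero then show ?case by simp
next
  case (step r c k)
  have "(\<lambda>x. a x + (c x + k * r x)) = (\<lambda>x. (a x + c x) + k * r x)" by (simp add: algebra_simps)
  moreover have "(\<lambda>x. (a x + c x) + k * r x) \<in> zspan R"
    by (rule zspan.step[OF step.hyps(1) step.IH[OF step.prems]])
  ultimately show ?case by simp
qed

lemma zspan_smult: "a \<in> zspan R \<Longrightarrow> (\<lambda>x. k * a x) \<in> zspan R"
proof (induction a rule: zspan.induct)
  case zero then show ?case by (simp add: zspan.zero)
next
  case (step r c j)
  have "(\<lambda>x. k * (c x + j * r x)) = (\<lambda>x. k * c x + (k * j) * r x)" by (simp add: algebra_simps)
  moreover have "(\<lambda>x. k * c x + (k * j) * r x) \<in> zspan R"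
    by (rule zspan.step[OF step.hyps(1) step.IH])
  ultimately show ?case by simp
qed

lemma zspan_base: "r \<in> R \<Longrightarrow> r \<in> zspan R"
  using zspan.step[OF _ zspan.zero, of r R 1] by simp

lemma zspan_diff: "a \<in> zspan R \<Longrightarrow> b \<in> zspan R \<Longrightarrow> (\<lambda>x. a x - b x) \<in> zspan R"
  using zspan_add[OF zspan_smult[of b R "-1"], of a] by simp

lemma zspan_zero': "(\<lambda>_. 0) \<in> zspan R" by (rule zspan.zero)

lemma zspan_fin: "a \<in> zspan R \<Longrightarrow> (\<And>r. r \<in> R \<Longrightarrow> fin r) \<Longrightarrow> fin a"
  by (induction a rule: zspan.induct) auto

lemma zspan_sum: "finite A \<Longrightarrow> (\<And>i. i \<in> A \<Longrightarrow> f i \<in> zspan R) \<Longrightarrow> (\<lambda>x. \<Sum>i\<in>A. f i x) \<in> zspan R"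
proof (induction A rule: finite_induct)
  case empty then show ?case by (simp add: zspan.zero)
next
  case (insert a F) then show ?case using zspan_add[of "\<lambda>x. \<Sum>i\<in>F. f i x" R "f a"] by simp
qed



abbreviation pe where "pe \<equiv> prod_encode"
abbreviation pd where "pd \<equiv> prod_decode"

lemma fst_rack_prod: "fst (rack_prod R R') = pe ` (fst R \<times> fst R')"
  by (auto simp: rack_prod_def)
lemma op_rack_prod[simp]: "snd (rack_prod R R') (pe (a,b)) (pe (c,d)) = pe (snd R a c, snd R' b d)"
  by (simp add: rack_prod_def prod_encode_inverse)
lemma fst_zset_prod: "fst (zset_prod X Y) = pe ` (fst X \<times> fst Y)"
  by (auto simp: zset_prod_def)
lemma op_zset_prod[simp]: "snd (zset_prod X Y) (pe (a,b)) = pe (snd X a, snd Y b)"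
  by (simp add: zset_prod_def prod_encode_inverse)
lemma fst_perm_rack[simp]: "fst (perm_rack X) = fst X" by (simp add: perm_rack_def)
lemma snd_perm_rack[simp]: "snd (perm_rack X) a b = snd X b" by (simp add: perm_rack_def)

lemma pe_mem[simp]: "pe (a,b) \<in> pe ` (A \<times> B) \<longleftrightarrow> a \<in> A \<and> b \<in> B"
  by (auto dest: inj_onD[OF inj_prod_encode, simplified])

lemma bij_prod_map:
  assumes f: "bij_betw f A A" and g: "bij_betw g B B"
  shows "bij_betw (\<lambda>v. pe (f (fst (pd v)), g (snd (pd v)))) (pe ` (A \<times> B)) (pe ` (A \<times> B))"
proof (rule bij_betw_imageI)
  show "inj_on (\<lambda>v. pe (f (fst (pd v)), g (snd (pd v)))) (pe ` (A \<times> B))"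
  proof (rule inj_onI)
    fix u v assume "u \<in> pe ` (A \<times> B)" "v \<in> pe ` (A \<times> B)"
      and eq: "pe (f (fst (pd u)), g (snd (pd u))) = pe (f (fst (pd v)), g (snd (pd v)))"
    then obtain a b c d where u: "u = pe (a,b)" "a \<in> A" "b \<in> B" and v: "v = pe (c,d)" "c \<in> A" "d \<in> B" by auto
    from eq have "f a = f c" "g b = g d" by (auto simp: u v prod_encode_inverse prod_encode_eq)
    then have "a = c" "b = d" using f g u v by (auto simp: bij_betw_def dest: inj_onD)
    then show "u = v" using u v by simp
  qed
  have "(\<lambda>v. pe (f (fst (pd v)), g (snd (pd v)))) ` (pe ` (A \<times> B)) = pe ` (f ` A \<times> g ` B)"
    by (force simp: prod_encode_inverse)
  then show "(\<lambda>v. pe (f (fst (pd v)), g (snd (pd v)))) ` (pe ` (A \<times> B)) = pe ` (A \<times> B)"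
    using f g by (simp add: bij_betw_def)
qed

lemma snd_rack_prod: "snd (rack_prod R R') u = (\<lambda>v. pe (snd R (fst (pd u)) (fst (pd v)), snd R' (snd (pd u)) (snd (pd v))))"
  by (simp add: rack_prod_def)

lemma rack_prod_rack:
  assumes "is_rack R" "is_rack R'" shows "is_rack (rack_prod R R')"
  unfolding is_rack_def fst_rack_prod
proof (intro conjI ballI)
  fix u assume "u \<in> pe ` (fst R \<times> fst R')"
  then obtain a b where u: "u = pe (a,b)" "a \<in> fst R" "b \<in> fst R'" by auto
  show "bij_betw (snd (rack_prod R R') u) (pe ` (fst R \<times> fst R')) (pe ` (fst R \<times> fst R'))"
    unfolding snd_rack_prod
    by (rule bij_prod_map) (use assms u in \<open>auto simp: is_rack_def prod_encode_inverse\<close>)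
next
  fix u v w assume "u \<in> pe ` (fst R \<times> fst R')" "v \<in> pe ` (fst R \<times> fst R')" "w \<in> pe ` (fst R \<times> fst R')"
  then obtain a b c d e g where "u = pe (a,b)" "a \<in> fst R" "b \<in> fst R'"
    "v = pe (c,d)" "c \<in> fst R" "d \<in> fst R'" "w = pe (e,g)" "e \<in> fst R" "g \<in> fst R'" by auto
  then show "snd (rack_prod R R') u (snd (rack_prod R R') v w) =
       snd (rack_prod R R') (snd (rack_prod R R') u v) (snd (rack_prod R R') u w)"
    using assms by (simp add: is_rack_def)
qed

lemma perm_rack_rack: "is_zset X \<Longrightarrow> is_rack (perm_rack X)"
  by (simp add: is_rack_def is_zset_def perm_rack_def)

lemma rack_prod_quandle:
  assumes "is_quandle R" "is_quandle R'" shows "is_quandle (rack_prod R R')"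
  using assms rack_prod_rack unfolding is_quandle_def fst_rack_prod by auto

lemma zset_prod_zset:
  assumes "is_zset X" "is_zset Y" shows "is_zset (zset_prod X Y)"
proof -
  have "snd (zset_prod X Y) = (\<lambda>v. pe (snd X (fst (pd v)), snd Y (snd (pd v))))"
    by (simp add: zset_prod_def)
  then show ?thesis using assms bij_prod_map[of "snd X" "fst X" "snd Y" "fst Y"]
    unfolding is_zset_def fst_zset_prod by auto
qed

lemma finite_rack_prod: "finite (fst R) \<Longrightarrow> finite (fst R') \<Longrightarrow> finite (fst (rack_prod R R'))"
  by (simp add: fst_rack_prod)

lemma card_rack_prod: "finite (fst R) \<Longrightarrow> finite (fst R') \<Longrightarrow> card (fst (rack_prod R R')) = card (fst R) * card (fst R')"
  by (simp add: fst_rack_prod card_image inj_on_def card_cartesian_product prod_encode_eq)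



lemma bij_prod_map2:
  assumes f: "bij_betw f A A'" and g: "bij_betw g B B'"
  shows "bij_betw (\<lambda>v. pe (f (fst (pd v)), g (snd (pd v)))) (pe ` (A \<times> B)) (pe ` (A' \<times> B'))"
proof (rule bij_betw_imageI)
  show "inj_on (\<lambda>v. pe (f (fst (pd v)), g (snd (pd v)))) (pe ` (A \<times> B))"
  proof (rule inj_onI)
    fix u v assume "u \<in> pe ` (A \<times> B)" "v \<in> pe ` (A \<times> B)"
      and eq: "pe (f (fst (pd u)), g (snd (pd u))) = pe (f (fst (pd v)), g (snd (pd v)))"
    then obtain a b c d where u: "u = pe (a,b)" "a \<in> A" "b \<in> B" and v: "v = pe (c,d)" "c \<in> A" "d \<in> B" by auto
    from eq have "f a = f c" "g b = g d" by (auto simp: u v prod_encode_inverse prod_encode_eq)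
    then have "a = c" "b = d" using f g u v by (auto simp: bij_betw_def dest: inj_onD)
    then show "u = v" using u v by simp
  qed
  have "(\<lambda>v. pe (f (fst (pd v)), g (snd (pd v)))) ` (pe ` (A \<times> B)) = pe ` (f ` A \<times> g ` B)"
    by (force simp: prod_encode_inverse)
  then show "(\<lambda>v. pe (f (fst (pd v)), g (snd (pd v)))) ` (pe ` (A \<times> B)) = pe ` (A' \<times> B')"
    using f g by (simp add: bij_betw_def)
qed

lemma rack_iso_refl: "rack_iso R R"
  unfolding rack_iso_def by (rule exI[of _ id]) auto

lemma rack_closed: "is_rack R \<Longrightarrow> a \<in> fst R \<Longrightarrow> b \<in> fst R \<Longrightarrow> snd R a b \<in> fst R"
  unfolding is_rack_def bij_betw_def by blast

lemma rack_iso_sym: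
  assumes R: "is_rack R" and iso: "rack_iso R R'" shows "rack_iso R' R"
proof -
  obtain f where f: "bij_betw f (fst R) (fst R')"
    and h: "\<forall>a\<in>fst R. \<forall>b\<in>fst R. f (snd R a b) = snd R' (f a) (f b)"
    using iso unfolding rack_iso_def by blast
  let ?g = "inv_into (fst R) f"
  have g: "bij_betw ?g (fst R') (fst R)" by (rule bij_betw_inv_into[OF f])
  have "?g (snd R' a b) = snd R (?g a) (?g b)" if "a \<in> fst R'" "b \<in> fst R'" for a b
  proof -
    have ga: "?g a \<in> fst R" "?g b \<in> fst R" using g that by (auto simp: bij_betw_def)
    have "f (?g a) = a" "f (?g b) = b" using f that by (auto simp: bij_betw_def f_inv_into_f)
    then have "snd R' a b = f (snd R (?g a) (?g b))" using h ga by metis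
    then show ?thesis using rack_closed[OF R ga] f by (simp add: bij_betw_def)
  qed
  then show ?thesis unfolding rack_iso_def using g by blast
qed

lemma perm_rack_iso: "zset_iso X Y \<Longrightarrow> rack_iso (perm_rack X) (perm_rack Y)"
  unfolding zset_iso_def rack_iso_def perm_rack_def by auto

lemma rack_prod_iso:
  assumes "rack_iso R1 R2" "rack_iso R1' R2'"
  shows "rack_iso (rack_prod R1 R1') (rack_prod R2 R2')"
proof -
  obtain f where f: "bij_betw f (fst R1) (fst R2)"
    and hf: "\<forall>a\<in>fst R1. \<forall>b\<in>fst R1. f (snd R1 a b) = snd R2 (f a) (f b)"
    using assms(1) unfolding rack_iso_def by blast
  obtain g where g: "bij_betw g (fst R1') (fst R2')"
    and hg: "\<forall>a\<in>fst R1'. \<forall>b\<in>fst R1'. g (snd R1' a b) = snd R2' (g a) (g b)"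
    using assms(2) unfolding rack_iso_def by blast
  let ?F = "\<lambda>v. pe (f (fst (pd v)), g (snd (pd v)))"
  have "bij_betw ?F (fst (rack_prod R1 R1')) (fst (rack_prod R2 R2'))"
    unfolding fst_rack_prod by (rule bij_prod_map2[OF f g])
  moreover have "\<forall>a\<in>fst (rack_prod R1 R1'). \<forall>b\<in>fst (rack_prod R1 R1').
     ?F (snd (rack_prod R1 R1') a b) = snd (rack_prod R2 R2') (?F a) (?F b)"
    unfolding fst_rack_prod using hf hg by (auto simp: prod_encode_inverse)
  ultimately show ?thesis unfolding rack_iso_def by blast
qed

lemma img_prod: "snd (rack_prod R R') (pe (a,b)) ` (pe ` (A \<times> B)) = pe ` (snd R a ` A \<times> snd R' b ` B)"
  by (force simp: snd_rack_prod prod_encode_inverse)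

lemma decomp_X:
  assumes X: "is_zset X" and Q: "is_rack Q" and d: "zset_decomp X S T"
  shows "rack_decomp (rack_prod (perm_rack X) Q) (pe ` (S \<times> fst Q)) (pe ` (T \<times> fst Q))"
    and "rack_prod (perm_rack (S, snd X)) Q = (pe ` (S \<times> fst Q), snd (rack_prod (perm_rack X) Q))"
proof -
  have SX: "snd X ` S = S" "snd X ` T = T" "S \<inter> T = {}" "S \<union> T = fst X" using d by (auto simp: zset_decomp_def)
  have Qb: "\<And>q. q \<in> fst Q \<Longrightarrow> snd Q q ` fst Q = fst Q" using Q by (auto simp: is_rack_def bij_betw_def)
  have sub: "is_subrack (pe ` (U \<times> fst Q)) (rack_prod (perm_rack X) Q)" if "snd X ` U = U" "U \<subseteq> fst X" for U
    unfolding is_subrack_def fst_rack_prod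
  proof (intro conjI ballI)
    show "pe ` (U \<times> fst Q) \<subseteq> pe ` (fst (perm_rack X) \<times> fst Q)" using that by auto
    fix s assume "s \<in> pe ` (U \<times> fst Q)"
    then obtain a b where s: "s = pe (a,b)" "a \<in> U" "b \<in> fst Q" by auto
    have "snd (perm_rack X) a ` U = U" using that by (simp add: perm_rack_def)
    then show "snd (rack_prod (perm_rack X) Q) s ` pe ` (U \<times> fst Q) = pe ` (U \<times> fst Q)"
      unfolding s img_prod using Qb[OF s(3)] by simp
  qed
  show "rack_decomp (rack_prod (perm_rack X) Q) (pe ` (S \<times> fst Q)) (pe ` (T \<times> fst Q))"
    unfolding rack_decomp_def
  proof (intro conjI)
    show "is_subrack (pe ` (S \<times> fst Q)) (rack_prod (perm_rack X) Q)" by (rule sub) (use SX in auto)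
    show "is_subrack (pe ` (T \<times> fst Q)) (rack_prod (perm_rack X) Q)" by (rule sub) (use SX in auto)
    show "pe ` (S \<times> fst Q) \<inter> pe ` (T \<times> fst Q) = {}" using SX(3) by (auto simp: prod_encode_eq)
    show "pe ` (S \<times> fst Q) \<union> pe ` (T \<times> fst Q) = fst (rack_prod (perm_rack X) Q)"
      unfolding fst_rack_prod fst_perm_rack SX(4)[symmetric] by (simp add: image_Un[symmetric] Sigma_Un_distrib1)
  qed
  show "rack_prod (perm_rack (S, snd X)) Q = (pe ` (S \<times> fst Q), snd (rack_prod (perm_rack X) Q))"
    by (auto simp: rack_prod_def perm_rack_def)
qed

lemma decomp_Q:
  assumes X: "is_zset X" and d: "rack_decomp Q S T"
  shows "rack_decomp (rack_prod (perm_rack X) Q) (pe ` (fst X \<times> S)) (pe ` (fst X \<times> T))"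
    and "rack_prod (perm_rack X) (S, snd Q) = (pe ` (fst X \<times> S), snd (rack_prod (perm_rack X) Q))"
proof -
  have SQ: "is_subrack S Q" "is_subrack T Q" "S \<inter> T = {}" "S \<union> T = fst Q" using d by (auto simp: rack_decomp_def)
  have Xb: "snd X ` fst X = fst X" using X by (auto simp: is_zset_def bij_betw_def)
  have sub: "is_subrack (pe ` (fst X \<times> U)) (rack_prod (perm_rack X) Q)" if "is_subrack U Q" for U
    unfolding is_subrack_def fst_rack_prod
  proof (intro conjI ballI)
    show "pe ` (fst X \<times> U) \<subseteq> pe ` (fst (perm_rack X) \<times> fst Q)" using that by (auto simp: is_subrack_def)
    fix s assume "s \<in> pe ` (fst X \<times> U)"
    then obtain a b where s: "s = pe (a,b)" "a \<in> fst X" "b \<in> U" by auto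
    have "snd (perm_rack X) a ` fst X = fst X" using Xb by (simp add: perm_rack_def)
    moreover have "snd Q b ` U = U" using that s by (auto simp: is_subrack_def)
    ultimately show "snd (rack_prod (perm_rack X) Q) s ` pe ` (fst X \<times> U) = pe ` (fst X \<times> U)"
      unfolding s img_prod by simp
  qed
  show "rack_decomp (rack_prod (perm_rack X) Q) (pe ` (fst X \<times> S)) (pe ` (fst X \<times> T))"
    unfolding rack_decomp_def
  proof (intro conjI)
    show "is_subrack (pe ` (fst X \<times> S)) (rack_prod (perm_rack X) Q)" by (rule sub) (use SQ in auto)
    show "is_subrack (pe ` (fst X \<times> T)) (rack_prod (perm_rack X) Q)" by (rule sub) (use SQ in auto)
    show "pe ` (fst X \<times> S) \<inter> pe ` (fst X \<times> T) = {}" using SQ(3) by (auto simp: prod_encode_eq)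
    show "pe ` (fst X \<times> S) \<union> pe ` (fst X \<times> T) = fst (rack_prod (perm_rack X) Q)"
      unfolding fst_rack_prod fst_perm_rack SQ(4)[symmetric] by (simp add: image_Un[symmetric] Sigma_Un_distrib2)
  qed
  show "rack_prod (perm_rack X) (S, snd Q) = (pe ` (fst X \<times> S), snd (rack_prod (perm_rack X) Q))"
    by (auto simp: rack_prod_def perm_rack_def)
qed



definition bphi :: "zs \<times> rk \<Rightarrow> rk" where "bphi p = rack_prod (perm_rack (fst p)) (snd p)"

lemma bm_def': "burnside_map = linext bphi"
proof -
  have "(\<lambda>(X, Q). rack_prod (perm_rack X) Q) = bphi" by (auto simp: bphi_def)
  then show ?thesis by (simp add: burnside_map_def)
qed

lemma linext_gen2: "linext \<phi> (\<lambda>x. gen a x - gen b x) = (\<lambda>y. gen (\<phi> a) y - gen (\<phi> b) y)"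
  by (simp add: linext_diff linext_gen)
lemma linext_gen3: "linext \<phi> (\<lambda>x. gen a x - gen b x - gen c x) = (\<lambda>y. gen (\<phi> a) y - gen (\<phi> b) y - gen (\<phi> c) y)"
proof -
  have "linext \<phi> (\<lambda>x. gen a x - gen b x - gen c x) = (\<lambda>y. linext \<phi> (\<lambda>x. gen a x - gen b x) y - linext \<phi> (gen c) y)"
    by (rule linext_diff) auto
  then show ?thesis by (simp add: linext_gen2 linext_gen)
qed

lemma bphi_rack: "is_zset X \<Longrightarrow> finite_rack Q \<Longrightarrow> finite_rack (bphi (X, Q))"
  unfolding bphi_def finite_rack_def
  using rack_prod_rack[OF perm_rack_rack] finite_rack_prod[of "perm_rack X" Q]
  by (auto simp: is_zset_def)

lemma bphi_subX: "bphi ((S, snd X), Q) = (pe ` (S \<times> fst Q), snd (bphi (X, Q)))"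
  by (auto simp: bphi_def rack_prod_def perm_rack_def)
lemma bphi_subQ: "bphi (X, (S, snd Q)) = (pe ` (fst X \<times> S), snd (bphi (X, Q)))"
  by (auto simp: bphi_def rack_prod_def perm_rack_def)

lemma rel_decomp: "finite_rack R \<Longrightarrow> rack_decomp R S T \<Longrightarrow> (\<lambda>x. gen R x - gen (S, snd R) x - gen (T, snd R) x) \<in> rack_rels"
  unfolding rack_rels_def by blast
lemma rel_iso: "finite_rack R1 \<Longrightarrow> finite_rack R2 \<Longrightarrow> rack_iso R1 R2 \<Longrightarrow> (\<lambda>x. gen R1 x - gen R2 x) \<in> rack_rels"
  unfolding rack_rels_def by blast

lemma fq_fr: "finite_quandle Q \<Longrightarrow> finite_rack Q"
  by (simp add: finite_quandle_def finite_rack_def is_quandle_def)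

lemma fin_tensor_rels: "r \<in> tensor_rels \<Longrightarrow> fin r"
proof -
  have z: "fin r" if "r \<in> zset_rels" for r using that unfolding zset_rels_def by auto
  have q: "fin r" if "r \<in> quandle_rels" for r using that unfolding quandle_rels_def by auto
  have 1: "fin (\<lambda>(X, Q). if Q = Q0 then r X else (0::int))" if "fin r" for r :: "zs \<Rightarrow> int" and Q0 :: rk
    using that unfolding fin_def fsupp_def
    by (rule finite_subset[rotated, OF finite_cartesian_product[OF _ finite.insertI[OF finite.emptyI, of Q0]]])
       (auto split: if_splits)
  have 2: "fin (\<lambda>(X, Q). if X = X0 then s Q else (0::int))" if "fin s" for s :: "rk \<Rightarrow> int" and X0 :: zs
    using that unfolding fin_def fsupp_def
    by (rule finite_subset[rotated, OF finite_cartesian_product[OF finite.insertI[OF finite.emptyI, of X0]]])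
       (auto split: if_splits)
  assume "r \<in> tensor_rels"
  then show "fin r" unfolding tensor_rels_def using 1 2 z q by blast
qed

lemma fin_rack_rels: "r \<in> rack_rels \<Longrightarrow> fin r"
  unfolding rack_rels_def by auto

lemma bm_tensor_rel: "r \<in> tensor_rels \<Longrightarrow> linext bphi r \<in> rack_rels"
proof -
  assume "r \<in> tensor_rels"
  then consider (A) r0 Q0 where "r = (\<lambda>(X, Q). if Q = Q0 then r0 X else 0)" "r0 \<in> zset_rels" "finite_quandle Q0"
    | (B) X0 s where "r = (\<lambda>(X, Q). if X = X0 then s Q else 0)" "is_zset X0" "s \<in> quandle_rels"
    unfolding tensor_rels_def by blast
  then show ?thesis
  proof cases
    case A
    from A(2) consider (A1) X1 X2 where "r0 = (\<lambda>x. gen X1 x - gen X2 x)" "is_zset X1" "is_zset X2" "zset_iso X1 X2"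
      | (A2) X S T where "r0 = (\<lambda>x. gen X x - gen (S, snd X) x - gen (T, snd X) x)" "is_zset X" "zset_decomp X S T"
      unfolding zset_rels_def by blast
    then show ?thesis
    proof cases
      case A1
      have "r = (\<lambda>p. gen (X1, Q0) p - gen (X2, Q0) p)" using A(1) A1(1) by (auto simp: gen_def fun_eq_iff)
      then have "linext bphi r = (\<lambda>y. gen (bphi (X1, Q0)) y - gen (bphi (X2, Q0)) y)" by (simp add: linext_gen2)
      moreover have "finite_rack (bphi (X1, Q0))" "finite_rack (bphi (X2, Q0))"
        using bphi_rack fq_fr A A1 by auto
      moreover have "rack_iso (bphi (X1, Q0)) (bphi (X2, Q0))"
        unfolding bphi_def by (auto intro: rack_prod_iso perm_rack_iso A1 rack_iso_refl)
      ultimately show ?thesis unfolding rack_rels_def by blast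
    next
      case A2
      have "r = (\<lambda>p. gen (X, Q0) p - gen ((S, snd X), Q0) p - gen ((T, snd X), Q0) p)"
        using A(1) A2(1) by (auto simp: gen_def fun_eq_iff)
      then have e: "linext bphi r = (\<lambda>y. gen (bphi (X, Q0)) y - gen (bphi ((S, snd X), Q0)) y - gen (bphi ((T, snd X), Q0)) y)"
        by (simp add: linext_gen3)
      have Qr: "is_rack Q0" using fq_fr[OF A(3)] by (simp add: finite_rack_def)
      note d = decomp_X[OF A2(2) Qr A2(3)]
      have "finite_rack (bphi (X, Q0))" using bphi_rack fq_fr A A2 by auto
      moreover have "rack_decomp (bphi (X, Q0)) (pe ` (S \<times> fst Q0)) (pe ` (T \<times> fst Q0))"
        using d(1) by (simp add: bphi_def)
      ultimately show ?thesis unfolding e bphi_subX[of S X Q0] bphi_subX[of T X Q0] by (rule rel_decomp)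
    qed
  next
    case B
    from B(3) consider (B1) Q1 Q2 where "s = (\<lambda>x. gen Q1 x - gen Q2 x)" "finite_quandle Q1" "finite_quandle Q2" "rack_iso Q1 Q2"
      | (B2) Q S T where "s = (\<lambda>x. gen Q x - gen (S, snd Q) x - gen (T, snd Q) x)" "finite_quandle Q" "rack_decomp Q S T"
      unfolding quandle_rels_def by blast
    then show ?thesis
    proof cases
      case B1
      have "r = (\<lambda>p. gen (X0, Q1) p - gen (X0, Q2) p)" using B(1) B1(1) by (auto simp: gen_def fun_eq_iff)
      then have "linext bphi r = (\<lambda>y. gen (bphi (X0, Q1)) y - gen (bphi (X0, Q2)) y)" by (simp add: linext_gen2)
      moreover have "finite_rack (bphi (X0, Q1))" "finite_rack (bphi (X0, Q2))"
        using bphi_rack fq_fr B B1 by auto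
      moreover have "rack_iso (bphi (X0, Q1)) (bphi (X0, Q2))"
        unfolding bphi_def by (auto intro: rack_prod_iso B1 rack_iso_refl)
      ultimately show ?thesis unfolding rack_rels_def by blast
    next
      case B2
      have "r = (\<lambda>p. gen (X0, Q) p - gen (X0, (S, snd Q)) p - gen (X0, (T, snd Q)) p)"
        using B(1) B2(1) by (auto simp: gen_def fun_eq_iff)
      then have e: "linext bphi r = (\<lambda>y. gen (bphi (X0, Q)) y - gen (bphi (X0, (S, snd Q))) y - gen (bphi (X0, (T, snd Q))) y)"
        by (simp add: linext_gen3)
      note d = decomp_Q[OF B(2) B2(3)]
      have d2: "rack_decomp Q T S" using B2(3) by (auto simp: rack_decomp_def)
      have "finite_rack (bphi (X0, Q))" using bphi_rack fq_fr B B2 by auto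
      moreover have "rack_decomp (bphi (X0, Q)) (pe ` (fst X0 \<times> S)) (pe ` (fst X0 \<times> T))"
        using d(1) by (simp add: bphi_def)
      ultimately show ?thesis unfolding e bphi_subQ[of X0 S Q] bphi_subQ[of X0 T Q] by (rule rel_decomp)
    qed
  qed
qed

lemma part1: "c \<in> zspan tensor_rels \<Longrightarrow> linext bphi c \<in> zspan rack_rels"
proof (induction c rule: zspan.induct)
  case zero then show ?case by (simp add: linext_zero zspan.zero)
next
  case (step r c k)
  have fr: "fin r" using fin_tensor_rels step.hyps(1) by blast
  have fc: "fin c" using zspan_fin[OF step.hyps(2) fin_tensor_rels] by blast
  have "linext bphi (\<lambda>x. c x + k * r x) = (\<lambda>y. linext bphi c y + k * linext bphi r y)"
    using fr fc by (simp add: linext_add linext_smult)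
  moreover have "(\<lambda>y. linext bphi c y + k * linext bphi r y) \<in> zspan rack_rels"
    by (rule zspan.step[OF bm_tensor_rel[OF step.hyps(1)] step.IH])
  ultimately show ?case by simp
qed



lemma part3: "(\<lambda>x. burnside_map (gen (zset_one, rack_one)) x - gen rack_one x) \<in> zspan rack_rels"
proof -
  have "bphi (zset_one, rack_one) = rack_one"
    by (auto simp: bphi_def rack_prod_def perm_rack_def zset_one_def rack_one_def prod_encode_def)
  then have "(\<lambda>x. burnside_map (gen (zset_one, rack_one)) x - gen rack_one x) = (\<lambda>_. 0)"
    by (simp add: bm_def' linext_gen)
  then show ?thesis by (simp add: zspan.zero)
qed

lemma assoc_iso:
  "rack_iso (rack_prod (perm_rack (zset_prod X Y)) (rack_prod Q Q'))
            (rack_prod (rack_prod (perm_rack X) Q) (rack_prod (perm_rack Y) Q'))"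
proof -
  define F where "F u = pe (pe (fst (pd (fst (pd u))), fst (pd (snd (pd u)))), pe (snd (pd (fst (pd u))), snd (pd (snd (pd u)))))" for u
  have FF: "F (pe (pe (a,b), pe (c,d))) = pe (pe (a,c), pe (b,d))" for a b c d
    by (simp add: F_def prod_encode_inverse)
  have L: "fst (rack_prod (perm_rack (zset_prod X Y)) (rack_prod Q Q')) = pe ` (pe ` (fst X \<times> fst Y) \<times> pe ` (fst Q \<times> fst Q'))"
    by (simp add: fst_rack_prod fst_zset_prod)
  have R: "fst (rack_prod (rack_prod (perm_rack X) Q) (rack_prod (perm_rack Y) Q')) = pe ` (pe ` (fst X \<times> fst Q) \<times> pe ` (fst Y \<times> fst Q'))"
    by (simp add: fst_rack_prod)
  have bij: "bij_betw F (pe ` (pe ` (fst X \<times> fst Y) \<times> pe ` (fst Q \<times> fst Q'))) (pe ` (pe ` (fst X \<times> fst Q) \<times> pe ` (fst Y \<times> fst Q')))"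
  proof (rule bij_betw_byWitness[where f'=F])
    show "\<forall>a\<in>pe ` (pe ` (fst X \<times> fst Y) \<times> pe ` (fst Q \<times> fst Q')). F (F a) = a" by (auto simp: FF)
    show "\<forall>a\<in>pe ` (pe ` (fst X \<times> fst Q) \<times> pe ` (fst Y \<times> fst Q')). F (F a) = a" by (auto simp: FF)
    show "F ` pe ` (pe ` (fst X \<times> fst Y) \<times> pe ` (fst Q \<times> fst Q')) \<subseteq> pe ` (pe ` (fst X \<times> fst Q) \<times> pe ` (fst Y \<times> fst Q'))"
      by (auto simp: FF)
    show "F ` pe ` (pe ` (fst X \<times> fst Q) \<times> pe ` (fst Y \<times> fst Q')) \<subseteq> pe ` (pe ` (fst X \<times> fst Y) \<times> pe ` (fst Q \<times> fst Q'))"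
      by (auto simp: FF)
  qed
  have hom: "F (snd (rack_prod (perm_rack (zset_prod X Y)) (rack_prod Q Q')) u v) =
     snd (rack_prod (rack_prod (perm_rack X) Q) (rack_prod (perm_rack Y) Q')) (F u) (F v)"
    if "u \<in> pe ` (pe ` (fst X \<times> fst Y) \<times> pe ` (fst Q \<times> fst Q'))"
       "v \<in> pe ` (pe ` (fst X \<times> fst Y) \<times> pe ` (fst Q \<times> fst Q'))" for u v
    using that by (auto simp: FF)
  show ?thesis unfolding rack_iso_def L R using bij hom by blast
qed

lemma tens_repr:
  assumes "fin f" "fin g"
  shows "(\<lambda>(a, b). f a * g b) = (\<lambda>p. \<Sum>q\<in>fsupp f \<times> fsupp g. (f (fst q) * g (snd q)) * gen q p)"
proof
  fix p :: "'a \<times> 'b"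
  obtain a b where p: "p = (a,b)" by force
  have fin: "finite (fsupp f \<times> fsupp g)" using assms by (simp add: fin_def)
  show "(case p of (a, b) \<Rightarrow> f a * g b) = (\<Sum>q\<in>fsupp f \<times> fsupp g. f (fst q) * g (snd q) * gen q p)"
    unfolding sum_gen[OF fin] by (auto simp: p fsupp_def)
qed

lemma linext_sum_id: "finite A \<Longrightarrow> linext \<psi> (\<lambda>y. \<Sum>x\<in>A. a x * gen x y) = (\<lambda>z. \<Sum>x\<in>A. a x * gen (\<psi> x) z)"
  using linext_sum[of A \<psi> a "\<lambda>x. x"] by simp

lemma gen_pair: "gen a r1 * gen b r2 = gen (a, b) (r1, r2)"
  by (simp add: gen_def)

lemma part2:
  assumes c: "c \<in> FS tensor_gens" and d: "d \<in> FS tensor_gens"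
  shows "(\<lambda>x. burnside_map (conv tensor_mult c d) x - conv rack_prod (burnside_map c) (burnside_map d) x) \<in> zspan rack_rels"
proof -
  let ?A = "fsupp c" and ?B = "fsupp d"
  have fc: "fin c" and fd: "fin d" using c d by (auto simp: FS_def fin_def fsupp_def)
  have fA: "finite ?A" and fB: "finite ?B" using fc fd by (auto simp: fin_def)
  have fAB: "finite (?A \<times> ?B)" using fA fB by simp
  have gA: "x \<in> tensor_gens" if "x \<in> ?A" for x using c that unfolding FS_def fsupp_def by blast
  have gB: "x \<in> tensor_gens" if "x \<in> ?B" for x using d that unfolding FS_def fsupp_def by blast
  let ?w = "\<lambda>q. c (fst q) * d (snd q)"
  have 1: "burnside_map (conv tensor_mult c d) = (\<lambda>y. \<Sum>q\<in>?A \<times> ?B. ?w q * gen (bphi ((\<lambda>(a, b). tensor_mult a b) q)) y)"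
    unfolding conv_def tens_repr[OF fc fd] bm_def'
    by (simp add: linext_sum_id[OF fAB] linext_sum[OF fAB])
  have bc: "burnside_map c = (\<lambda>y. \<Sum>x\<in>?A. c x * gen (bphi x) y)"
    unfolding bm_def' by (subst fin_repr[OF fc]) (simp add: linext_sum_id[OF fA])
  have bd: "burnside_map d = (\<lambda>y. \<Sum>x\<in>?B. d x * gen (bphi x) y)"
    unfolding bm_def' by (subst fin_repr[OF fd]) (simp add: linext_sum_id[OF fB])
  have t: "(\<lambda>(r1, r2). burnside_map c r1 * burnside_map d r2) = (\<lambda>p. \<Sum>q\<in>?A \<times> ?B. ?w q * gen (bphi (fst q), bphi (snd q)) p)"
  proof
    fix p :: "rk \<times> rk"
    obtain r1 r2 where p: "p = (r1, r2)" by (cases p)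
    have "burnside_map c r1 * burnside_map d r2 = (\<Sum>x\<in>?A. \<Sum>x'\<in>?B. (c x * gen (bphi x) r1) * (d x' * gen (bphi x') r2))"
      unfolding bc bd by (simp add: sum_product)
    also have "\<dots> = (\<Sum>q\<in>?A \<times> ?B. (c (fst q) * gen (bphi (fst q)) r1) * (d (snd q) * gen (bphi (snd q)) r2))"
      by (simp add: sum.cartesian_product split_beta)
    also have "\<dots> = (\<Sum>q\<in>?A \<times> ?B. ?w q * gen (bphi (fst q), bphi (snd q)) p)"
      by (rule sum.cong) (auto simp: p gen_pair[symmetric] algebra_simps)
    finally show "(case p of (r1, r2) \<Rightarrow> burnside_map c r1 * burnside_map d r2) = (\<Sum>q\<in>?A \<times> ?B. ?w q * gen (bphi (fst q), bphi (snd q)) p)"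
      by (simp add: p)
  qed
  have 2: "conv rack_prod (burnside_map c) (burnside_map d) = (\<lambda>y. \<Sum>q\<in>?A \<times> ?B. ?w q * gen (rack_prod (bphi (fst q)) (bphi (snd q))) y)"
    unfolding conv_def t by (simp add: linext_sum[OF fAB])
  have each: "(\<lambda>y. ?w q * (gen (bphi ((\<lambda>(a, b). tensor_mult a b) q)) y - gen (rack_prod (bphi (fst q)) (bphi (snd q))) y)) \<in> zspan rack_rels"
    if q: "q \<in> ?A \<times> ?B" for q
  proof -
    obtain X Q Y Q' where qq: "q = ((X, Q), (Y, Q'))" by (metis prod.collapse)
    have "(X, Q) \<in> tensor_gens" "(Y, Q') \<in> tensor_gens" using gA gB q qq by auto
    then have X: "is_zset X" "finite_quandle Q" and Y: "is_zset Y" "finite_quandle Q'"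
      by (auto simp: tensor_gens_def)
    have e1: "bphi ((\<lambda>(a, b). tensor_mult a b) q) = rack_prod (perm_rack (zset_prod X Y)) (rack_prod Q Q')"
      by (simp add: qq tensor_mult_def bphi_def)
    have e2: "rack_prod (bphi (fst q)) (bphi (snd q)) = rack_prod (rack_prod (perm_rack X) Q) (rack_prod (perm_rack Y) Q')"
      by (simp add: qq bphi_def)
    have fQQ: "finite_rack (rack_prod Q Q')"
      using X Y rack_prod_rack finite_rack_prod by (auto simp: finite_quandle_def is_quandle_def finite_rack_def)
    have r1: "finite_rack (rack_prod (perm_rack (zset_prod X Y)) (rack_prod Q Q'))"
      using bphi_rack[OF zset_prod_zset[OF X(1) Y(1)] fQQ] by (simp add: bphi_def)
    have r2: "finite_rack (rack_prod (rack_prod (perm_rack X) Q) (rack_prod (perm_rack Y) Q'))"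
      using bphi_rack[OF X(1) fq_fr[OF X(2)]] bphi_rack[OF Y(1) fq_fr[OF Y(2)]]
        rack_prod_rack finite_rack_prod by (auto simp: bphi_def finite_rack_def)
    show ?thesis unfolding e1 e2
      by (rule zspan_smult[OF zspan_base[OF rel_iso[OF r1 r2 assoc_iso]]])
  qed
  have "(\<lambda>x. burnside_map (conv tensor_mult c d) x - conv rack_prod (burnside_map c) (burnside_map d) x)
     = (\<lambda>y. \<Sum>q\<in>?A \<times> ?B. ?w q * (gen (bphi ((\<lambda>(a, b). tensor_mult a b) q)) y - gen (rack_prod (bphi (fst q)) (bphi (snd q))) y))"
    unfolding 1 2 by (simp add: sum_subtractf right_diff_distrib)
  also have "\<dots> \<in> zspan rack_rels"
    by (rule zspan_sum[OF fAB each])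
  finally show ?thesis .
qed



definition conn :: "rk \<Rightarrow> bool" where
  "conn K \<longleftrightarrow> fst K \<noteq> {} \<and> (\<forall>A\<subseteq>fst K. (\<forall>k\<in>fst K. snd K k ` A \<subseteq> A) \<longrightarrow> A = {} \<or> A = fst K)"

definition Inv :: "rk \<Rightarrow> rk \<Rightarrow> int" where
  "Inv K R = int (card {A. A \<subseteq> fst R \<and> rack_iso K (A, snd R)})"

definition Lf :: "('a \<Rightarrow> int) \<Rightarrow> ('a \<Rightarrow> int) \<Rightarrow> int" where
  "Lf I h = (\<Sum>R\<in>fsupp h. h R * I R)"

lemma Lf_eq: "finite A \<Longrightarrow> fsupp h \<subseteq> A \<Longrightarrow> Lf I h = (\<Sum>R\<in>A. h R * I R)"
  unfolding Lf_def by (rule sum.mono_neutral_left) (auto simp: fsupp_def)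

lemma Lf_add: "fin f \<Longrightarrow> fin g \<Longrightarrow> Lf I (\<lambda>x. f x + g x) = Lf I f + Lf I g"
proof -
  assume "fin f" "fin g"
  let ?A = "fsupp f \<union> fsupp g"
  have A: "finite ?A" using \<open>fin f\<close> \<open>fin g\<close> by (simp add: fin_def)
  have 1: "Lf I (\<lambda>x. f x + g x) = (\<Sum>R\<in>?A. (f R + g R) * I R)" by (rule Lf_eq[OF A]) (auto simp: fsupp_def)
  have 2: "Lf I f = (\<Sum>R\<in>?A. f R * I R)" by (rule Lf_eq[OF A]) (auto simp: fsupp_def)
  have 3: "Lf I g = (\<Sum>R\<in>?A. g R * I R)" by (rule Lf_eq[OF A]) (auto simp: fsupp_def)
  show ?thesis unfolding 1 2 3 by (simp add: sum.distrib distrib_right)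
qed

lemma Lf_diff: "fin f \<Longrightarrow> fin g \<Longrightarrow> Lf I (\<lambda>x. f x - g x) = Lf I f - Lf I g"
proof -
  assume "fin f" "fin g"
  let ?A = "fsupp f \<union> fsupp g"
  have A: "finite ?A" using \<open>fin f\<close> \<open>fin g\<close> by (simp add: fin_def)
  have 1: "Lf I (\<lambda>x. f x - g x) = (\<Sum>R\<in>?A. (f R - g R) * I R)" by (rule Lf_eq[OF A]) (auto simp: fsupp_def)
  have 2: "Lf I f = (\<Sum>R\<in>?A. f R * I R)" by (rule Lf_eq[OF A]) (auto simp: fsupp_def)
  have 3: "Lf I g = (\<Sum>R\<in>?A. g R * I R)" by (rule Lf_eq[OF A]) (auto simp: fsupp_def)
  show ?thesis unfolding 1 2 3 by (simp add: sum_subtractf left_diff_distrib)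
qed

lemma Lf_smult: "fin f \<Longrightarrow> Lf I (\<lambda>x. k * f x) = k * Lf I f"
proof -
  assume "fin f"
  have A: "finite (fsupp f)" using \<open>fin f\<close> by (simp add: fin_def)
  have 1: "Lf I (\<lambda>x. k * f x) = (\<Sum>R\<in>fsupp f. (k * f R) * I R)" by (rule Lf_eq[OF A]) (auto simp: fsupp_def)
  have 2: "Lf I f = (\<Sum>R\<in>fsupp f. f R * I R)" by (rule Lf_eq[OF A]) auto
  show ?thesis unfolding 1 2 by (simp add: sum_distrib_left mult.assoc)
qed

lemma Lf_gen: "Lf I (gen a) = I a"
  by (subst Lf_eq[of "{a}"]) (auto simp: fsupp_def gen_def)

lemma Lf_zero: "Lf I (\<lambda>_. 0) = 0"
  by (simp add: Lf_def fsupp_def)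

lemma Lf_zspan:
  assumes "h \<in> zspan Rs" and "\<And>r. r \<in> Rs \<Longrightarrow> fin r \<and> Lf I r = 0"
  shows "Lf I h = 0"
  using assms(1)
proof (induction h rule: zspan.induct)
  case zero then show ?case by (simp add: Lf_zero)
next
  case (step r c k)
  have fc: "fin c" using zspan_fin[OF step.hyps(2)] assms(2) by blast
  have fr: "fin r" "Lf I r = 0" using assms(2)[OF step.hyps(1)] by auto
  show ?case using Lf_add[OF fc fin_smult[OF fr(1)]] Lf_smult[OF fr(1)] fr(2) step.IH by simp
qed

lemma iso_compose:
  assumes K: "rack_iso K (A, snd R)" and A: "A \<subseteq> fst R" and f: "bij_betw f (fst R) (fst R')"
    and hf: "\<forall>a\<in>fst R. \<forall>b\<in>fst R. f (snd R a b) = snd R' (f a) (f b)"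
  shows "rack_iso K (f ` A, snd R')"
proof -
  obtain h where h: "bij_betw h (fst K) A" and hh: "\<forall>a\<in>fst K. \<forall>b\<in>fst K. h (snd K a b) = snd R (h a) (h b)"
    using K unfolding rack_iso_def by auto
  have fA: "bij_betw f A (f ` A)" using f A by (meson bij_betw_def bij_betw_subset)
  have "bij_betw (f \<circ> h) (fst K) (f ` A)" by (rule bij_betw_trans[OF h fA])
  moreover have "\<forall>a\<in>fst K. \<forall>b\<in>fst K. (f \<circ> h) (snd K a b) = snd R' ((f \<circ> h) a) ((f \<circ> h) b)"
  proof (intro ballI)
    fix a b assume ab: "a \<in> fst K" "b \<in> fst K"
    then have "h a \<in> fst R" "h b \<in> fst R" using h A by (auto simp: bij_betw_def)
    then show "(f \<circ> h) (snd K a b) = snd R' ((f \<circ> h) a) ((f \<circ> h) b)" using hh hf ab by simp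
  qed
  ultimately show ?thesis unfolding rack_iso_def by auto
qed

lemma Inv_le:
  assumes iso: "rack_iso R R'" and fin: "finite (fst R')"
  shows "Inv K R \<le> Inv K R'"
proof -
  obtain f where f: "bij_betw f (fst R) (fst R')"
    and hf: "\<forall>a\<in>fst R. \<forall>b\<in>fst R. f (snd R a b) = snd R' (f a) (f b)"
    using iso unfolding rack_iso_def by blast
  let ?S = "{A. A \<subseteq> fst R \<and> rack_iso K (A, snd R)}"
  let ?S' = "{A. A \<subseteq> fst R' \<and> rack_iso K (A, snd R')}"
  have inj: "inj_on (image f) ?S"
    by (rule inj_on_subset[OF inj_on_image_Pow]) (use f in \<open>auto simp: bij_betw_def\<close>)
  have sub: "image f ` ?S \<subseteq> ?S'"
  proof
    fix B assume "B \<in> image f ` ?S"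
    then obtain A where A: "A \<subseteq> fst R" "rack_iso K (A, snd R)" "B = f ` A" by auto
    have "B \<subseteq> fst R'" using A f by (auto simp: bij_betw_def)
    moreover have "rack_iso K (B, snd R')" using iso_compose[OF A(2) A(1) f hf] A(3) by simp
    ultimately show "B \<in> ?S'" by simp
  qed
  have "finite ?S'" by (rule finite_subset[of _ "Pow (fst R')"]) (use fin in auto)
  then have "card ?S \<le> card ?S'" using card_inj_on_le[OF inj sub] by simp
  then show ?thesis unfolding Inv_def by simp
qed

lemma Inv_iso:
  assumes "is_rack R" "rack_iso R R'" "finite (fst R)" "finite (fst R')"
  shows "Inv K R = Inv K R'"
  using Inv_le[OF assms(2) assms(4), of K] Inv_le[OF rack_iso_sym[OF assms(1,2)] assms(3), of K] by simp

lemma conn_split: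
  assumes R: "is_rack R" and d: "rack_decomp R S T" and K: "conn K" "is_rack K"
    and A: "A \<subseteq> fst R" "rack_iso K (A, snd R)"
  shows "A \<subseteq> S \<or> A \<subseteq> T"
proof -
  obtain h where h: "bij_betw h (fst K) A" and hh: "\<forall>a\<in>fst K. \<forall>b\<in>fst K. h (snd K a b) = snd R (h a) (h b)"
    using A(2) unfolding rack_iso_def by auto
  have dd: "S \<subseteq> fst R" "T \<subseteq> fst R" "\<forall>s\<in>S. snd R s ` S = S" "\<forall>s\<in>T. snd R s ` T = T" "S \<inter> T = {}" "S \<union> T = fst R"
  proof -
    have d': "is_subrack S R" "is_subrack T R" "S \<inter> T = {}" "S \<union> T = fst R"
      using d unfolding rack_decomp_def by simp_all
    then show "S \<subseteq> fst R" "T \<subseteq> fst R" "\<forall>s\<in>S. snd R s ` S = S" "\<forall>s\<in>T. snd R s ` T = T" "S \<inter> T = {}" "S \<union> T = fst R"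
      unfolding is_subrack_def by simp_all
  qed
  have pres: "snd R r s \<in> S" if rs: "r \<in> fst R" "s \<in> S" for r s
  proof (cases "r \<in> S")
    case True
    have e: "snd R r ` S = S" using bspec[OF dd(3) True] .
    have m: "snd R r s \<in> snd R r ` S" using rs(2) by (rule imageI)
    show ?thesis using m unfolding e .
  next
    case False
    have rT: "r \<in> T" using False rs(1) dd(6) by auto
    have bij: "bij_betw (snd R r) (fst R) (fst R)" using R rs(1) unfolding is_rack_def by blast
    have sR: "s \<in> fst R" using rs(2) dd(1) by auto
    have inR: "snd R r s \<in> fst R" using bij sR unfolding bij_betw_def by auto
    have nT: "snd R r s \<notin> T"
    proof
      assume sT: "snd R r s \<in> T"
      have "snd R r ` T = T" using bspec[OF dd(4) rT] .
      then have "snd R r s \<in> snd R r ` T" using sT by simp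
      then obtain t where t: "t \<in> T" "snd R r t = snd R r s" by (rule imageE) simp
      have tR: "t \<in> fst R" using t(1) dd(2) by auto
      have "inj_on (snd R r) (fst R)" using bij unfolding bij_betw_def by simp
      then have "t = s" using t(2) tR sR by (rule inj_onD)
      then show False using t(1) rs(2) dd(5) by auto
    qed
    show ?thesis using inR nT dd(6) by auto
  qed
  let ?B = "{k \<in> fst K. h k \<in> S}"
  have "\<forall>k\<in>fst K. snd K k ` ?B \<subseteq> ?B"
  proof (intro ballI subsetI)
    fix k y assume k: "k \<in> fst K" and "y \<in> snd K k ` ?B"
    then obtain b where b: "b \<in> fst K" "h b \<in> S" "y = snd K k b" by auto
    have "y \<in> fst K" using rack_closed[OF K(2) k b(1)] b by simp
    moreover have "h y = snd R (h k) (h b)" using hh k b by simp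
    moreover have "h k \<in> fst R" using h k A(1) by (auto simp: bij_betw_def)
    ultimately show "y \<in> ?B" using pres b by simp
  qed
  moreover have "?B \<subseteq> fst K" by auto
  ultimately have "?B = {} \<or> ?B = fst K" using K(1) unfolding conn_def by blast
  moreover have "A = h ` fst K" using h by (simp add: bij_betw_def)
  ultimately show ?thesis using A(1) dd(6) by auto
qed

lemma Inv_add:
  assumes R: "is_rack R" "finite (fst R)" and d: "rack_decomp R S T" and K: "conn K" "is_rack K"
  shows "Inv K R = Inv K (S, snd R) + Inv K (T, snd R)"
proof -
  let ?P = "\<lambda>A. rack_iso K (A, snd R)"
  have dd: "S \<inter> T = {}" "S \<union> T = fst R" using d by (auto simp: rack_decomp_def)
  have ne: "A \<noteq> {}" if "?P A" for A
  proof -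
    have "\<exists>h. bij_betw h (fst K) A" using that unfolding rack_iso_def by auto
    then obtain h where "bij_betw h (fst K) A" by blast
    then show ?thesis using K(1) by (auto simp: conn_def bij_betw_def)
  qed
  have eq: "{A. A \<subseteq> fst R \<and> ?P A} = {A. A \<subseteq> S \<and> ?P A} \<union> {A. A \<subseteq> T \<and> ?P A}"
  proof (intro equalityI subsetI)
    fix A assume "A \<in> {A. A \<subseteq> fst R \<and> ?P A}"
    then have A: "A \<subseteq> fst R" "?P A" by auto
    then have "A \<subseteq> S \<or> A \<subseteq> T" by (rule conn_split[OF R(1) d K])
    then show "A \<in> {A. A \<subseteq> S \<and> ?P A} \<union> {A. A \<subseteq> T \<and> ?P A}" using A(2) by blast
  next
    fix A assume "A \<in> {A. A \<subseteq> S \<and> ?P A} \<union> {A. A \<subseteq> T \<and> ?P A}"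
    then show "A \<in> {A. A \<subseteq> fst R \<and> ?P A}" using dd(2) by blast
  qed
  have disj: "{A. A \<subseteq> S \<and> ?P A} \<inter> {A. A \<subseteq> T \<and> ?P A} = {}"
  proof (rule ccontr)
    assume "{A. A \<subseteq> S \<and> ?P A} \<inter> {A. A \<subseteq> T \<and> ?P A} \<noteq> {}"
    then obtain A where "A \<subseteq> S" "A \<subseteq> T" "?P A" by blast
    then have "A = {}" "A \<noteq> {}" using dd(1) ne by blast+
    then show False by simp
  qed
  have fS: "finite S" "finite T" using R(2) dd(2) by (metis finite_Un)+
  have f1: "finite {A. A \<subseteq> S \<and> ?P A}" by (rule finite_subset[of _ "Pow S"]) (use fS in auto)
  have f2: "finite {A. A \<subseteq> T \<and> ?P A}" by (rule finite_subset[of _ "Pow T"]) (use fS in auto)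
  show ?thesis unfolding Inv_def eq using card_Un_disjoint[OF f1 f2 disj] by simp
qed

lemma Inv_size:
  assumes "finite (fst R)" "finite (fst K)" "card (fst R) \<le> card (fst K)"
  shows "Inv K R = (if rack_iso K R then 1 else 0)"
proof -
  have sub: "{A. A \<subseteq> fst R \<and> rack_iso K (A, snd R)} \<subseteq> {fst R}"
  proof
    fix A assume A: "A \<in> {A. A \<subseteq> fst R \<and> rack_iso K (A, snd R)}"
    then obtain h where "bij_betw h (fst K) A" unfolding rack_iso_def by auto
    then have "card A = card (fst K)" by (simp add: bij_betw_same_card)
    moreover have "A \<subseteq> fst R" using A by simp
    ultimately have "A = fst R" using card_seteq[OF assms(1), of A] assms(3) by simp
    then show "A \<in> {fst R}" by simp
  qed
  show ?thesis
  proof (cases "rack_iso K R")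
    case True
    then have "fst R \<in> {A. A \<subseteq> fst R \<and> rack_iso K (A, snd R)}" by simp
    then have E: "{A. A \<subseteq> fst R \<and> rack_iso K (A, snd R)} = {fst R}" using sub by blast
    show ?thesis unfolding Inv_def E using True by simp
  next
    case False
    then have "fst R \<notin> {A. A \<subseteq> fst R \<and> rack_iso K (A, snd R)}" by simp
    then have E: "{A. A \<subseteq> fst R \<and> rack_iso K (A, snd R)} = {}" using sub by blast
    show ?thesis unfolding Inv_def E using False by simp
  qed
qed

lemma Lf_rack_rels:
  assumes K: "conn K" "is_rack K" and h: "h \<in> zspan rack_rels"
  shows "Lf (Inv K) h = 0"
proof (rule Lf_zspan[OF h])
  fix r assume "r \<in> rack_rels"
  then consider (I) R1 R2 where "r = (\<lambda>x. gen R1 x - gen R2 x)" "finite_rack R1" "finite_rack R2" "rack_iso R1 R2"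
    | (D) R S T where "r = (\<lambda>x. gen R x - gen (S, snd R) x - gen (T, snd R) x)" "finite_rack R" "rack_decomp R S T"
    unfolding rack_rels_def by blast
  then show "fin r \<and> Lf (Inv K) r = 0"
  proof cases
    case I
    then show ?thesis using Inv_iso[of R1 R2 K] by (simp add: Lf_diff Lf_gen finite_rack_def)
  next
    case D
    have "Lf (Inv K) r = Inv K R - Inv K (S, snd R) - Inv K (T, snd R)"
      unfolding D(1) by (simp add: Lf_diff Lf_gen)
    then show ?thesis using Inv_add[of R S T K] D K by (simp add: finite_rack_def)
  qed
qed



definition zcyc :: "zs \<Rightarrow> bool" where
  "zcyc X \<longleftrightarrow> is_zset X \<and> fst X \<noteq> {} \<and> (\<forall>A\<subseteq>fst X. snd X ` A \<subseteq> A \<longrightarrow> A = {} \<or> A = fst X)"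

lemma fst_bphi: "fst (bphi (X, Q)) = pe ` (fst X \<times> fst Q)"
  by (simp add: bphi_def fst_rack_prod)
lemma op_bphi[simp]: "snd (bphi (X, Q)) (pe (a,b)) (pe (c,d)) = pe (snd X c, snd Q b d)"
  by (simp add: bphi_def)

lemma zset_closed: "is_zset X \<Longrightarrow> x \<in> fst X \<Longrightarrow> snd X x \<in> fst X"
  unfolding is_zset_def bij_betw_def by blast

lemma zset_surj: "is_zset X \<Longrightarrow> x \<in> fst X \<Longrightarrow> \<exists>y\<in>fst X. x = snd X y"
  unfolding is_zset_def bij_betw_def by blast

lemma conn_prod:
  assumes X: "zcyc X" and Q: "conn Q" "is_quandle Q"
  shows "conn (bphi (X, Q))"
  unfolding conn_def fst_bphi
proof (intro conjI allI impI)
  show "pe ` (fst X \<times> fst Q) \<noteq> {}" using X Q by (auto simp: zcyc_def conn_def)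
  fix A assume sub: "A \<subseteq> pe ` (fst X \<times> fst Q)"
    and inv: "\<forall>k\<in>pe ` (fst X \<times> fst Q). snd (bphi (X, Q)) k ` A \<subseteq> A"
  have step: "snd (bphi (X, Q)) (pe (x, p)) (pe (y, q)) \<in> A" if "x \<in> fst X" "p \<in> fst Q" "pe (y, q) \<in> A" for x p y q
  proof -
    have "pe (x,p) \<in> pe ` (fst X \<times> fst Q)" using that by simp
    then show ?thesis using inv that(3) by blast
  qed
  have Xz: "is_zset X" using X by (simp add: zcyc_def)
  have Qr: "is_rack Q" using Q by (simp add: is_quandle_def)
  show "A = {} \<or> A = pe ` (fst X \<times> fst Q)"
  proof (cases "A = {}")
    case False
    then obtain u where "u \<in> A" by blast
    then obtain x0 q0 where x0: "x0 \<in> fst X" "q0 \<in> fst Q" "pe (x0, q0) \<in> A" using sub by blast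
    let ?C = "{x \<in> fst X. pe (x, q0) \<in> A}"
    have "snd X ` ?C \<subseteq> ?C"
    proof
      fix z assume "z \<in> snd X ` ?C"
      then obtain x where x: "x \<in> fst X" "pe (x, q0) \<in> A" "z = snd X x" by blast
      have "snd (bphi (X, Q)) (pe (x, q0)) (pe (x, q0)) \<in> A" using step[OF x(1) x0(2) x(2)] .
      moreover have "snd Q q0 q0 = q0" using Q(2) x0(2) by (simp add: is_quandle_def)
      ultimately have "pe (z, q0) \<in> A" using x(3) by simp
      then show "z \<in> ?C" using zset_closed[OF Xz x(1)] x(3) by simp
    qed
    moreover have "?C \<subseteq> fst X" by blast
    moreover have "x0 \<in> ?C" using x0 by simp
    ultimately have C: "?C = fst X" using X unfolding zcyc_def by blast
    let ?B = "{q \<in> fst Q. \<forall>x\<in>fst X. pe (x, q) \<in> A}"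
    have "\<forall>p\<in>fst Q. snd Q p ` ?B \<subseteq> ?B"
    proof (intro ballI subsetI)
      fix p z assume p: "p \<in> fst Q" and "z \<in> snd Q p ` ?B"
      then obtain q where q: "q \<in> fst Q" "\<forall>x\<in>fst X. pe (x, q) \<in> A" "z = snd Q p q" by blast
      have "pe (x, z) \<in> A" if x: "x \<in> fst X" for x
      proof -
        obtain y where y: "y \<in> fst X" "x = snd X y" using zset_surj[OF Xz x] by blast
        have "snd (bphi (X, Q)) (pe (y, p)) (pe (y, q)) \<in> A" using step[OF y(1) p] q(2) y(1) by blast
        then show ?thesis using y(2) q(3) by simp
      qed
      moreover have "z \<in> fst Q" using rack_closed[OF Qr p q(1)] q(3) by simp
      ultimately show "z \<in> ?B" by blast
    qed
    moreover have "?B \<subseteq> fst Q" by blast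
    moreover have "q0 \<in> ?B" using C x0(2) by auto
    ultimately have "?B = fst Q" using Q(1) unfolding conn_def by blast
    then have "pe ` (fst X \<times> fst Q) \<subseteq> A" by blast
    then show ?thesis using sub by blast
  qed simp
qed



lemma pe_pd_mem: "u \<in> pe ` (A \<times> B) \<Longrightarrow> u = pe (fst (pd u), snd (pd u)) \<and> fst (pd u) \<in> A \<and> snd (pd u) \<in> B"
  by (auto simp: prod_encode_inverse)

lemma snd_bphi: "snd (bphi (X, Q)) u v = pe (snd X (fst (pd v)), snd Q (snd (pd u)) (snd (pd v)))"
  by (simp add: bphi_def rack_prod_def perm_rack_def)

lemma refl_half:
  assumes X: "zcyc X" and X': "zcyc X'" and Q: "is_quandle Q" "fst Q \<noteq> {}" and Q': "is_quandle Q'"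
    and iso: "rack_iso (bphi (X, Q)) (bphi (X', Q'))"
  shows "\<exists>f. inj_on f (fst X) \<and> f ` fst X \<subseteq> fst X' \<and> (\<forall>x\<in>fst X. f (snd X x) = snd X' (f x))"
    and "\<exists>g. g ` fst Q = fst Q' \<and> (\<forall>q\<in>fst Q. \<forall>p\<in>fst Q. g (snd Q q p) = snd Q' (g q) (g p))"
proof -
  obtain F where F: "bij_betw F (pe ` (fst X \<times> fst Q)) (pe ` (fst X' \<times> fst Q'))"
    and hF: "\<forall>u\<in>pe ` (fst X \<times> fst Q). \<forall>v\<in>pe ` (fst X \<times> fst Q). F (snd (bphi (X, Q)) u v) = snd (bphi (X', Q')) (F u) (F v)"
    using iso unfolding rack_iso_def fst_bphi by blast
  have Xz: "is_zset X" using X by (simp add: zcyc_def)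
  have X'z: "is_zset X'" using X' by (simp add: zcyc_def)
  obtain a where a: "a \<in> fst X" using X by (auto simp: zcyc_def)
  obtain b where b: "b \<in> fst Q" using Q by auto
  have Fin: "F (pe (x,q)) \<in> pe ` (fst X' \<times> fst Q')" if "x \<in> fst X" "q \<in> fst Q" for x q
    using F that unfolding bij_betw_def by auto
  let ?sec = "\<lambda>u. snd (pd u)" and ?fir = "\<lambda>u. fst (pd u)"
  have Fdec: "F (pe (x,q)) = pe (?fir (F (pe (x,q))), ?sec (F (pe (x,q))))"
     "?fir (F (pe (x,q))) \<in> fst X'" "?sec (F (pe (x,q))) \<in> fst Q'" if "x \<in> fst X" "q \<in> fst Q" for x q
    using pe_pd_mem[OF Fin[OF that]] by auto
  have Fphi: "F (pe (snd X x, q)) = pe (snd X' (?fir (F (pe (x,q)))), ?sec (F (pe (x,q))))"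
    if "x \<in> fst X" "q \<in> fst Q" for x q
  proof -
    have "snd Q q q = q" using Q(1) that(2) by (simp add: is_quandle_def)
    then have e: "pe (snd X x, q) = snd (bphi (X, Q)) (pe (x,q)) (pe (x,q))" by simp
    have m: "pe (x,q) \<in> pe ` (fst X \<times> fst Q)" using that by simp
    have "F (snd (bphi (X, Q)) (pe (x,q)) (pe (x,q))) = snd (bphi (X', Q')) (F (pe (x,q))) (F (pe (x,q)))"
      using hF m by blast
    then have "F (pe (snd X x, q)) = snd (bphi (X', Q')) (F (pe (x,q))) (F (pe (x,q)))"
      unfolding e .
    also have "\<dots> = pe (snd X' (?fir (F (pe (x,q)))), snd Q' (?sec (F (pe (x,q)))) (?sec (F (pe (x,q)))))"
      by (simp add: snd_bphi)
    also have "snd Q' (?sec (F (pe (x,q)))) (?sec (F (pe (x,q)))) = ?sec (F (pe (x,q)))"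
      using Q' Fdec(3)[OF that] by (simp add: is_quandle_def)
    finally show ?thesis .
  qed
  have const: "?sec (F (pe (x,q))) = ?sec (F (pe (a,q)))" if "x \<in> fst X" "q \<in> fst Q" for x q
  proof -
    let ?D = "{x \<in> fst X. ?sec (F (pe (x,q))) = ?sec (F (pe (a,q)))}"
    have "snd X ` ?D \<subseteq> ?D"
    proof
      fix z assume "z \<in> snd X ` ?D"
      then obtain y where y: "y \<in> fst X" "?sec (F (pe (y,q))) = ?sec (F (pe (a,q)))" "z = snd X y" by blast
      have "?sec (F (pe (z,q))) = ?sec (F (pe (y,q)))" using Fphi[OF y(1) that(2)] y(3)
        by (simp add: prod_encode_inverse)
      then show "z \<in> ?D" using y zset_closed[OF Xz y(1)] by simp
    qed
    moreover have "?D \<subseteq> fst X" by blast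
    moreover have "a \<in> ?D" using a by simp
    ultimately have "?D = fst X" using X unfolding zcyc_def by blast
    then show ?thesis using that by blast
  qed
  define g where "g q = ?sec (F (pe (a,q)))" for q
  define f where "f x = ?fir (F (pe (x,b)))" for x
  have Fxb: "F (pe (x,b)) = pe (f x, g b)" if "x \<in> fst X" for x
    using Fdec(1)[OF that b] const[OF that b] unfolding f_def g_def by simp
  show "\<exists>f. inj_on f (fst X) \<and> f ` fst X \<subseteq> fst X' \<and> (\<forall>x\<in>fst X. f (snd X x) = snd X' (f x))"
  proof (intro exI conjI)
    show "inj_on f (fst X)"
    proof (rule inj_onI)
      fix x y assume xy: "x \<in> fst X" "y \<in> fst X" "f x = f y"
      then have "F (pe (x,b)) = F (pe (y,b))" using Fxb by simp
      moreover have "pe (x,b) \<in> pe ` (fst X \<times> fst Q)" "pe (y,b) \<in> pe ` (fst X \<times> fst Q)" using xy b by auto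
      ultimately have "pe (x,b) = pe (y,b)" using F unfolding bij_betw_def inj_on_def by blast
      then show "x = y" by (simp add: prod_encode_eq)
    qed
    show "f ` fst X \<subseteq> fst X'" using Fdec(2)[OF _ b] unfolding f_def by blast
    show "\<forall>x\<in>fst X. f (snd X x) = snd X' (f x)"
      using Fphi[OF _ b] unfolding f_def by (simp add: prod_encode_inverse)
  qed
  show "\<exists>g. g ` fst Q = fst Q' \<and> (\<forall>q\<in>fst Q. \<forall>p\<in>fst Q. g (snd Q q p) = snd Q' (g q) (g p))"
  proof (intro exI conjI)
    show "g ` fst Q = fst Q'"
    proof
      show "g ` fst Q \<subseteq> fst Q'" using Fdec(3)[OF a] unfolding g_def by blast
      show "fst Q' \<subseteq> g ` fst Q"
      proof
        fix q' assume q': "q' \<in> fst Q'"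
        obtain a' where a': "a' \<in> fst X'" using X' by (auto simp: zcyc_def)
        have "pe (a', q') \<in> F ` (pe ` (fst X \<times> fst Q))" using F a' q' unfolding bij_betw_def by simp
        then obtain x q where xq: "x \<in> fst X" "q \<in> fst Q" "pe (a', q') = F (pe (x,q))" by blast
        have "q' = ?sec (F (pe (x,q)))" using xq(3) by (metis prod_encode_inverse snd_conv)
        also have "\<dots> = g q" using const[OF xq(1,2)] unfolding g_def by simp
        finally show "q' \<in> g ` fst Q" using xq(2) by blast
      qed
    qed
    show "\<forall>q\<in>fst Q. \<forall>p\<in>fst Q. g (snd Q q p) = snd Q' (g q) (g p)"
    proof (intro ballI)
      fix q p assume qp: "q \<in> fst Q" "p \<in> fst Q"
      have Qr: "is_rack Q" using Q(1) by (simp add: is_quandle_def)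
      have qpQ: "snd Q q p \<in> fst Q" using rack_closed[OF Qr qp] .
      have "g (snd Q q p) = ?sec (F (pe (snd X a, snd Q q p)))"
        unfolding g_def using const[OF zset_closed[OF Xz a] qpQ] by simp
      also have "pe (snd X a, snd Q q p) = snd (bphi (X, Q)) (pe (a,q)) (pe (a,p))" by simp
      also have "F \<dots> = snd (bphi (X', Q')) (F (pe (a,q))) (F (pe (a,p)))"
      proof -
        have "pe (a,q) \<in> pe ` (fst X \<times> fst Q)" "pe (a,p) \<in> pe ` (fst X \<times> fst Q)" using a qp by auto
        then show ?thesis using hF by blast
      qed
      also have "\<dots> = snd (bphi (X', Q')) (pe (?fir (F (pe (a,q))), g q)) (pe (?fir (F (pe (a,p))), g p))"
        using Fdec(1)[OF a qp(1)] Fdec(1)[OF a qp(2)] unfolding g_def by simp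
      finally show "g (snd Q q p) = snd Q' (g q) (g p)" by (simp add: prod_encode_inverse)
    qed
  qed
qed



lemma card_bphi: "finite (fst X) \<Longrightarrow> finite (fst Q) \<Longrightarrow> card (fst (bphi (X, Q))) = card (fst X) * card (fst Q)"
  unfolding bphi_def using card_rack_prod[of "perm_rack X" Q] by simp

lemma reflect:
  assumes X: "zcyc X" and X': "zcyc X'" and Q: "finite_quandle Q" "conn Q" and Q': "finite_quandle Q'" "conn Q'"
    and iso: "rack_iso (bphi (X, Q)) (bphi (X', Q'))"
  shows "zset_iso X X' \<and> rack_iso Q Q'"
proof -
  have Xz: "is_zset X" "is_zset X'" using X X' by (auto simp: zcyc_def)
  have fX: "finite (fst X)" "finite (fst X')" using Xz by (auto simp: is_zset_def)
  have fQ: "finite (fst Q)" "finite (fst Q')" using Q Q' by (auto simp: finite_quandle_def)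
  have qQ: "is_quandle Q" "is_quandle Q'" using Q Q' by (auto simp: finite_quandle_def)
  have neQ: "fst Q \<noteq> {}" "fst Q' \<noteq> {}" using Q Q' by (auto simp: conn_def)
  have rR: "is_rack (bphi (X, Q))" using bphi_rack[OF Xz(1) fq_fr[OF Q(1)]] by (simp add: finite_rack_def)
  have iso': "rack_iso (bphi (X', Q')) (bphi (X, Q))" by (rule rack_iso_sym[OF rR iso])
  obtain f where f: "inj_on f (fst X)" "f ` fst X \<subseteq> fst X'" "\<forall>x\<in>fst X. f (snd X x) = snd X' (f x)"
    using refl_half(1)[OF X X' qQ(1) neQ(1) qQ(2) iso] by blast
  obtain g where g: "g ` fst Q = fst Q'" "\<forall>q\<in>fst Q. \<forall>p\<in>fst Q. g (snd Q q p) = snd Q' (g q) (g p)"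
    using refl_half(2)[OF X X' qQ(1) neQ(1) qQ(2) iso] by blast
  obtain f' where f': "inj_on f' (fst X')" "f' ` fst X' \<subseteq> fst X"
    using refl_half(1)[OF X' X qQ(2) neQ(2) qQ(1) iso'] by blast
  have c1: "card (fst X) \<le> card (fst X')" using card_inj_on_le[OF f(1) f(2) fX(2)] .
  have c2: "card (fst X') \<le> card (fst X)" using card_inj_on_le[OF f'(1) f'(2) fX(1)] .
  have "card (f ` fst X) = card (fst X')" using c1 c2 card_image[OF f(1)] by simp
  then have fim: "f ` fst X = fst X'" using card_subset_eq[OF fX(2) f(2)] by simp
  have "bij_betw f (fst X) (fst X')" using f(1) fim by (simp add: bij_betw_def)
  then have zi: "zset_iso X X'" unfolding zset_iso_def using f(3) by blast
  have "\<exists>F. bij_betw F (fst (bphi (X, Q))) (fst (bphi (X', Q')))" using iso unfolding rack_iso_def by (elim exE conjE) (rule exI)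
  then obtain F where "bij_betw F (fst (bphi (X, Q))) (fst (bphi (X', Q')))" by (elim exE)
  then have "card (fst (bphi (X, Q))) = card (fst (bphi (X', Q')))" by (rule bij_betw_same_card)
  then have "card (fst X) * card (fst Q) = card (fst X') * card (fst Q')"
    unfolding card_bphi[OF fX(1) fQ(1)] card_bphi[OF fX(2) fQ(2)] .
  moreover have "fst X \<noteq> {}" using X unfolding zcyc_def by blast
  then have "card (fst X) > 0" using fX(1) by (simp add: card_gt_0_iff)
  ultimately have cQ: "card (fst Q) = card (fst Q')" using c1 c2 by simp
  have "inj_on g (fst Q)" by (rule eq_card_imp_inj_on[OF fQ(1)]) (use g(1) cQ in simp)
  then have "bij_betw g (fst Q) (fst Q')" using g(1) by (simp add: bij_betw_def)
  then have "rack_iso Q Q'" unfolding rack_iso_def using g(2) by blast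
  then show ?thesis using zi by simp
qed



definition lsum :: "(int \<times> 'a) list \<Rightarrow> 'a \<Rightarrow> int" where
  "lsum ts = (\<lambda>p. sum_list (map (\<lambda>t. fst t * gen (snd t) p) ts))"

lemma lsum_Nil: "lsum [] = (\<lambda>_. 0)" by (simp add: lsum_def)
lemma lsum_Cons: "lsum (t # ts) = (\<lambda>p. fst t * gen (snd t) p + lsum ts p)" by (simp add: lsum_def)

lemma fin_lsum: "fin (lsum ts)"
  by (induction ts) (simp_all add: lsum_Nil lsum_Cons)

lemma linext_lsum: "linext \<phi> (lsum ts) = lsum (map (\<lambda>t. (fst t, \<phi> (snd t))) ts)"
proof (induction ts)
  case Nil then show ?case by (simp add: lsum_Nil linext_zero)
next
  case (Cons t ts)
  have "linext \<phi> (lsum (t # ts)) = (\<lambda>y. linext \<phi> (\<lambda>p. fst t * gen (snd t) p) y + linext \<phi> (lsum ts) y)"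
    unfolding lsum_Cons by (rule linext_add) (auto simp: fin_lsum)
  also have "\<dots> = (\<lambda>y. fst t * gen (\<phi> (snd t)) y + lsum (map (\<lambda>t. (fst t, \<phi> (snd t))) ts) y)"
    by (simp add: linext_smult linext_gen Cons.IH)
  finally show ?case by (simp add: lsum_Cons)
qed

lemma Lf_lsum: "Lf I (lsum ts) = sum_list (map (\<lambda>t. fst t * I (snd t)) ts)"
proof (induction ts)
  case Nil then show ?case by (simp add: lsum_Nil Lf_zero)
next
  case (Cons t ts)
  have "Lf I (lsum (t # ts)) = Lf I (\<lambda>p. fst t * gen (snd t) p) + Lf I (lsum ts)"
    unfolding lsum_Cons by (rule Lf_add) (auto simp: fin_lsum)
  then show ?case by (simp add: Lf_smult Lf_gen Cons.IH)
qed

lemma lsum_filter: "lsum ts = (\<lambda>p. lsum (filter P ts) p + lsum (filter (\<lambda>t. \<not> P t) ts) p)"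
  by (induction ts) (auto simp: lsum_Nil lsum_Cons)

lemma sum_list_if: "sum_list (map (\<lambda>t. if P t then f t else 0) xs) = sum_list (map f (filter P xs))"
  by (induction xs) auto

lemma lsum_equiv:
  assumes "\<And>t. t \<in> set ts \<Longrightarrow> (\<lambda>p. gen (snd t) p - gen x0 p) \<in> zspan Rs"
  shows "(\<lambda>p. lsum ts p - sum_list (map fst ts) * gen x0 p) \<in> zspan Rs"
  using assms
proof (induction ts)
  case Nil then show ?case by (simp add: lsum_Nil zspan.zero)
next
  case (Cons t ts)
  have a: "(\<lambda>p. lsum ts p - sum_list (map fst ts) * gen x0 p) \<in> zspan Rs" using Cons by simp
  have b: "(\<lambda>p. fst t * (gen (snd t) p - gen x0 p)) \<in> zspan Rs" using zspan_smult[OF Cons.prems[of t]] by simp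
  have "(\<lambda>p. lsum (t # ts) p - sum_list (map fst (t # ts)) * gen x0 p)
      = (\<lambda>p. (lsum ts p - sum_list (map fst ts) * gen x0 p) + fst t * (gen (snd t) p - gen x0 p))"
    by (simp add: lsum_Cons algebra_simps)
  then show ?case using zspan_add[OF b a] by simp
qed

lemma trel1: "r \<in> zset_rels \<Longrightarrow> finite_quandle Q0 \<Longrightarrow> (\<lambda>(X, Q). if Q = Q0 then r X else 0) \<in> tensor_rels"
  unfolding tensor_rels_def by blast
lemma trel2: "is_zset X0 \<Longrightarrow> s \<in> quandle_rels \<Longrightarrow> (\<lambda>(X, Q). if X = X0 then s Q else 0) \<in> tensor_rels"
  unfolding tensor_rels_def by blast

lemma gen_equiv:
  assumes "is_zset X" "is_zset X'" "finite_quandle Q" "finite_quandle Q'" "zset_iso X X'" "rack_iso Q Q'"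
  shows "(\<lambda>p. gen (X', Q') p - gen (X, Q) p) \<in> zspan tensor_rels"
proof -
  have z: "(\<lambda>x. gen X x - gen X' x) \<in> zset_rels" using assms unfolding zset_rels_def by blast
  have q: "(\<lambda>x. gen Q x - gen Q' x) \<in> quandle_rels" using assms unfolding quandle_rels_def by blast
  have e1: "(\<lambda>(Y, P). if P = Q then (\<lambda>x. gen X x - gen X' x) Y else 0) = (\<lambda>p. gen (X, Q) p - gen (X', Q) p)"
    by (auto simp: gen_def fun_eq_iff)
  have e2: "(\<lambda>(Y, P). if Y = X' then (\<lambda>x. gen Q x - gen Q' x) P else 0) = (\<lambda>p. gen (X', Q) p - gen (X', Q') p)"
    by (auto simp: gen_def fun_eq_iff)
  have r1: "(\<lambda>p. gen (X, Q) p - gen (X', Q) p) \<in> zspan tensor_rels"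
    using zspan_base[OF trel1[OF z assms(3)]] unfolding e1 .
  have r2: "(\<lambda>p. gen (X', Q) p - gen (X', Q') p) \<in> zspan tensor_rels"
    using zspan_base[OF trel2[OF assms(2) q]] unfolding e2 .
  have "(\<lambda>p. (-1) * ((gen (X, Q) p - gen (X', Q) p) + (gen (X', Q) p - gen (X', Q') p))) \<in> zspan tensor_rels"
    by (rule zspan_smult[OF zspan_add[OF r2 r1]])
  then show ?thesis by (simp add: algebra_simps)
qed

definition good :: "int \<times> zs \<times> rk \<Rightarrow> bool" where
  "good t \<longleftrightarrow> zcyc (fst (snd t)) \<and> finite_quandle (snd (snd t)) \<and> conn (snd (snd t))"

lemma good_props:
  assumes "good t"
  shows "finite_rack (bphi (snd t))" "conn (bphi (snd t))" "is_rack (bphi (snd t))" "finite (fst (bphi (snd t)))"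
proof -
  obtain k X Q where t: "t = (k, X, Q)" by (cases t) auto
  have X1: "zcyc X" and Q: "finite_quandle Q" "conn Q" using assms unfolding good_def t by simp_all
  have X: "zcyc X" "is_zset X" using X1 unfolding zcyc_def by simp_all
  have Q3: "is_quandle Q" using Q(1) unfolding finite_quandle_def by simp
  note Q = Q Q3
  show fr: "finite_rack (bphi (snd t))" using bphi_rack[OF X(2) fq_fr[OF Q(1)]] by (simp add: t)
  show "conn (bphi (snd t))" using conn_prod[OF X(1) Q(2) Q(3)] by (simp add: t)
  show "is_rack (bphi (snd t))" "finite (fst (bphi (snd t)))" using fr by (auto simp: finite_rack_def)
qed

lemma stepB:
  "(\<forall>t\<in>set ts. good t) \<Longrightarrow> linext bphi (lsum ts) \<in> zspan rack_rels \<Longrightarrow> lsum ts \<in> zspan tensor_rels"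
proof (induction "length ts" arbitrary: ts rule: less_induct)
  case less
  show ?case
  proof (cases "ts = []")
    case True then show ?thesis by (simp add: lsum_Nil zspan.zero)
  next
    case False
    let ?c = "\<lambda>t. card (fst (bphi (snd t)))"
    let ?M = "Max (?c ` set ts)"
    have "?M \<in> ?c ` set ts" using False by (intro Max_in) auto
    then obtain ti where ti: "ti \<in> set ts" "?c ti = ?M" by auto
    have le: "?c t \<le> ?c ti" if "t \<in> set ts" for t using ti that by simp
    let ?K = "bphi (snd ti)"
    have gi: "good ti" using less.prems ti by blast
    note Kp = good_props[OF gi]
    let ?sim = "\<lambda>t. rack_iso ?K (bphi (snd t))"
    have "Lf (Inv ?K) (linext bphi (lsum ts)) = 0" by (rule Lf_rack_rels[OF Kp(2) Kp(3) less.prems(2)])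
    then have "sum_list (map (\<lambda>t. fst t * Inv ?K (bphi (snd t))) ts) = 0"
      by (simp add: linext_lsum Lf_lsum comp_def)
    moreover have "map (\<lambda>t. fst t * Inv ?K (bphi (snd t))) ts = map (\<lambda>t. if ?sim t then fst t else 0) ts"
    proof (rule map_cong[OF refl])
      fix t assume t: "t \<in> set ts"
      have "good t" using less.prems t by blast
      then have "Inv ?K (bphi (snd t)) = (if ?sim t then 1 else 0)"
        using Inv_size[OF good_props(4)[OF \<open>good t\<close>] Kp(4) le[OF t]] by simp
      then show "fst t * Inv ?K (bphi (snd t)) = (if ?sim t then fst t else 0)" by simp
    qed
    ultimately have s0: "sum_list (map fst (filter ?sim ts)) = 0" by (simp add: sum_list_if)
    have eqv: "(\<lambda>p. gen (snd t) p - gen (snd ti) p) \<in> zspan tensor_rels" if t: "t \<in> set (filter ?sim ts)" for t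
    proof -
      have tt: "t \<in> set ts" "?sim t" using t by auto
      have gt: "good t" using less.prems tt(1) by blast
      obtain k X Q where tq: "t = (k, X, Q)" by (cases t) auto
      obtain ki Xi Qi where tiq: "ti = (ki, Xi, Qi)" by (cases ti) auto
      have A: "zcyc X" "finite_quandle Q" "conn Q" using gt unfolding good_def tq by simp_all
      have B: "zcyc Xi" "finite_quandle Qi" "conn Qi" using gi unfolding good_def tiq by simp_all
      have AB: "is_zset X" "is_zset Xi" using A(1) B(1) unfolding zcyc_def by simp_all
      have "rack_iso (bphi (Xi, Qi)) (bphi (X, Q))" using tt(2) unfolding tq tiq by simp
      then have "zset_iso Xi X \<and> rack_iso Qi Q" using reflect[OF B(1) A(1) B(2) B(3) A(2) A(3)] by simp
      then have "(\<lambda>p. gen (X, Q) p - gen (Xi, Qi) p) \<in> zspan tensor_rels"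
        using gen_equiv[OF AB(2) AB(1) B(2) A(2)] by simp
      then show ?thesis unfolding tq tiq by simp
    qed
    have simpart: "lsum (filter ?sim ts) \<in> zspan tensor_rels"
      using lsum_equiv[of "filter ?sim ts" "snd ti" tensor_rels, OF eqv] s0 by simp
    let ?rest = "filter (\<lambda>t. \<not> ?sim t) ts"
    have len: "length ?rest < length ts"
      by (rule length_filter_less[OF ti(1)]) (simp add: rack_iso_refl)
    have split: "lsum ts = (\<lambda>p. lsum (filter ?sim ts) p + lsum ?rest p)" by (rule lsum_filter)
    have "linext bphi (lsum ts) = (\<lambda>y. linext bphi (lsum (filter ?sim ts)) y + linext bphi (lsum ?rest) y)"
      by (subst split) (rule linext_add[OF fin_lsum fin_lsum])
    then have "linext bphi (lsum ?rest) = (\<lambda>y. linext bphi (lsum ts) y - linext bphi (lsum (filter ?sim ts)) y)"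
      by (auto simp: fun_eq_iff)
    moreover have "(\<lambda>y. linext bphi (lsum ts) y - linext bphi (lsum (filter ?sim ts)) y) \<in> zspan rack_rels"
      by (rule zspan_diff[OF less.prems(2) part1[OF simpart]])
    ultimately have "linext bphi (lsum ?rest) \<in> zspan rack_rels" by simp
    moreover have "\<forall>t\<in>set ?rest. good t" using less.prems by auto
    ultimately have "lsum ?rest \<in> zspan tensor_rels" using less.hyps[OF len] by blast
    then have "(\<lambda>p. lsum (filter ?sim ts) p + lsum ?rest p) \<in> zspan tensor_rels"
      by (rule zspan_add[OF _ simpart])
    then show ?thesis by (subst split)
  qed
qed



lemma inv_subset:
  assumes f: "bij_betw f C C" and fin: "finite C" and A: "A \<subseteq> C" "f ` A \<subseteq> A"
  shows "f ` A = A" "f ` (C - A) = C - A"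
proof -
  have inj: "inj_on f C" using f by (simp add: bij_betw_def)
  have "card (f ` A) = card A" using card_image[OF inj_on_subset[OF inj A(1)]] .
  moreover have "finite A" using fin A(1) by (rule finite_subset[rotated])
  ultimately show fA: "f ` A = A" using card_subset_eq[OF _ A(2)] by simp
  have "f ` (C - A) = f ` C - f ` A" by (rule inj_on_image_set_diff[OF inj]) (use A in auto)
  then show "f ` (C - A) = C - A" using fA f by (simp add: bij_betw_def)
qed

lemma zset_split:
  assumes X: "is_zset X" "fst X \<noteq> {}" "\<not> zcyc X"
  obtains A where "A \<subset> fst X" "A \<noteq> {}" "zset_decomp X A (fst X - A)"
proof -
  obtain A where A: "A \<subseteq> fst X" "snd X ` A \<subseteq> A" "A \<noteq> {}" "A \<noteq> fst X"
    using X unfolding zcyc_def by blast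
  have b: "bij_betw (snd X) (fst X) (fst X)" "finite (fst X)" using X(1) by (auto simp: is_zset_def)
  note i = inv_subset[OF b A(1) A(2)]
  have "zset_decomp X A (fst X - A)" unfolding zset_decomp_def using i A(1) by auto
  then show ?thesis using that A by blast
qed

lemma sub_zset: "is_zset X \<Longrightarrow> snd X ` A = A \<Longrightarrow> A \<subseteq> fst X \<Longrightarrow> is_zset (A, snd X)"
  unfolding is_zset_def bij_betw_def by (auto intro: finite_subset inj_on_subset)

lemma quandle_split:
  assumes Q: "finite_quandle Q" "fst Q \<noteq> {}" "\<not> conn Q"
  obtains A where "A \<subset> fst Q" "A \<noteq> {}" "rack_decomp Q A (fst Q - A)"
proof -
  obtain A where A: "A \<subseteq> fst Q" "\<forall>k\<in>fst Q. snd Q k ` A \<subseteq> A" "A \<noteq> {}" "A \<noteq> fst Q"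
    using Q unfolding conn_def by blast
  have b: "\<And>k. k \<in> fst Q \<Longrightarrow> bij_betw (snd Q k) (fst Q) (fst Q)" "finite (fst Q)"
    using Q(1) by (auto simp: finite_quandle_def is_quandle_def is_rack_def)
  have i1: "snd Q k ` A = A" "snd Q k ` (fst Q - A) = fst Q - A" if "k \<in> fst Q" for k
    using inv_subset[OF b(1)[OF that] b(2) A(1)] A(2) that by auto
  have "rack_decomp Q A (fst Q - A)" unfolding rack_decomp_def is_subrack_def
  proof (intro conjI ballI)
    show "A \<subseteq> fst Q" by (rule A(1))
    show "fst Q - A \<subseteq> fst Q" by blast
    show "A \<inter> (fst Q - A) = {}" by blast
    show "A \<union> (fst Q - A) = fst Q" using A(1) by blast
    fix s assume "s \<in> A" then show "snd Q s ` A = A" using i1 A(1) by blast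
  next
    fix s assume "s \<in> fst Q - A" then show "snd Q s ` (fst Q - A) = fst Q - A" using i1 by blast
  qed
  then show ?thesis using that A by blast
qed

lemma sub_quandle:
  assumes Q: "finite_quandle Q" and S: "is_subrack A Q"
  shows "finite_quandle (A, snd Q)"
proof -
  have AQ: "A \<subseteq> fst Q" "\<forall>s\<in>A. snd Q s ` A = A" using S by (auto simp: is_subrack_def)
  have r: "is_rack Q" "\<forall>a\<in>fst Q. snd Q a a = a" "finite (fst Q)" using Q by (auto simp: finite_quandle_def is_quandle_def)
  have "bij_betw (snd Q a) A A" if "a \<in> A" for a
  proof -
    have "inj_on (snd Q a) (fst Q)" using r(1) that AQ(1) by (auto simp: is_rack_def bij_betw_def)
    then have "inj_on (snd Q a) A" using AQ(1) by (rule inj_on_subset)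
    then show ?thesis using AQ(2) that by (simp add: bij_betw_def)
  qed
  moreover have "\<forall>a\<in>A. \<forall>b\<in>A. \<forall>c\<in>A. snd Q a (snd Q b c) = snd Q (snd Q a b) (snd Q a c)"
    using r(1) AQ(1) unfolding is_rack_def by blast
  moreover have "\<forall>a\<in>A. snd Q a a = a" using r(2) AQ(1) by blast
  moreover have "finite A" using r(3) AQ(1) by (rule finite_subset[rotated])
  ultimately show ?thesis by (simp add: finite_quandle_def is_quandle_def is_rack_def)
qed



lemma lsum_append: "lsum (xs @ ys) = (\<lambda>p. lsum xs p + lsum ys p)"
  by (induction xs) (auto simp: lsum_Nil lsum_Cons)

lemma lsum_scale: "lsum (map (\<lambda>t. (k * fst t, snd t)) ts) = (\<lambda>p. k * lsum ts p)"
  by (induction ts) (auto simp: lsum_Nil lsum_Cons algebra_simps)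

lemma tdecX:
  assumes "is_zset X" "zset_decomp X S T" "finite_quandle Q"
  shows "(\<lambda>p. gen (X, Q) p - gen ((S, snd X), Q) p - gen ((T, snd X), Q) p) \<in> tensor_rels"
proof -
  have z: "(\<lambda>x. gen X x - gen (S, snd X) x - gen (T, snd X) x) \<in> zset_rels"
    using assms unfolding zset_rels_def by blast
  have e: "(\<lambda>(Y, P). if P = Q then (\<lambda>x. gen X x - gen (S, snd X) x - gen (T, snd X) x) Y else 0)
    = (\<lambda>p. gen (X, Q) p - gen ((S, snd X), Q) p - gen ((T, snd X), Q) p)"
    by (auto simp: gen_def fun_eq_iff)
  show ?thesis using trel1[OF z assms(3)] unfolding e .
qed

lemma tdecQ:
  assumes "is_zset X" "finite_quandle Q" "rack_decomp Q S T"
  shows "(\<lambda>p. gen (X, Q) p - gen (X, (S, snd Q)) p - gen (X, (T, snd Q)) p) \<in> tensor_rels"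
proof -
  have q: "(\<lambda>x. gen Q x - gen (S, snd Q) x - gen (T, snd Q) x) \<in> quandle_rels"
    using assms unfolding quandle_rels_def by blast
  have e: "(\<lambda>(Y, P). if Y = X then (\<lambda>x. gen Q x - gen (S, snd Q) x - gen (T, snd Q) x) P else 0)
    = (\<lambda>p. gen (X, Q) p - gen (X, (S, snd Q)) p - gen (X, (T, snd Q)) p)"
    by (auto simp: gen_def fun_eq_iff)
  show ?thesis using trel2[OF assms(1) q] unfolding e .
qed

lemma combine3:
  assumes "(\<lambda>p. a p - b p - c p) \<in> zspan R" "(\<lambda>p. b p - lb p) \<in> zspan R" "(\<lambda>p. c p - lc p) \<in> zspan R"
  shows "(\<lambda>p. a p - (lb p + lc p)) \<in> zspan R"
proof -
  have "(\<lambda>p. (a p - b p - c p) + ((b p - lb p) + (c p - lc p))) \<in> zspan R"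
    by (rule zspan_add[OF zspan_add[OF assms(3) assms(2)] assms(1)])
  then show ?thesis by (simp add: algebra_simps)
qed

lemma A1:
  "is_zset X \<Longrightarrow> finite_quandle Q \<Longrightarrow> \<exists>xs. (\<forall>Y\<in>set xs. zcyc Y) \<and>
     (\<lambda>p. gen (X, Q) p - lsum (map (\<lambda>Y. (1, (Y, Q))) xs) p) \<in> zspan tensor_rels"
proof (induction "card (fst X)" arbitrary: X rule: less_induct)
  case less
  have b: "bij_betw (snd X) (fst X) (fst X)" "finite (fst X)" using less.prems(1) by (auto simp: is_zset_def)
  consider (E) "fst X = {}" | (C) "zcyc X" | (S) "fst X \<noteq> {}" "\<not> zcyc X" by blast
  then show ?case
  proof cases
    case E
    have d: "zset_decomp X {} (fst X)" using b(1) unfolding zset_decomp_def by (simp add: bij_betw_def)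
    have XX: "({}, snd X) = X" "(fst X, snd X) = X" using E by (metis prod.collapse)+
    have "(\<lambda>p. gen (X, Q) p - gen (X, Q) p - gen (X, Q) p) \<in> zspan tensor_rels"
      using zspan_base[OF tdecX[OF less.prems(1) d less.prems(2)]] unfolding XX .
    then have "(\<lambda>p. (-1) * (gen (X, Q) p - gen (X, Q) p - gen (X, Q) p)) \<in> zspan tensor_rels"
      by (rule zspan_smult)
    then have "(\<lambda>p. gen (X, Q) p - lsum (map (\<lambda>Y. (1, (Y, Q))) []) p) \<in> zspan tensor_rels"
      by (simp add: lsum_Nil)
    then show ?thesis by (intro exI[of _ "[]"]) simp
  next
    case C
    have "(\<lambda>p. gen (X, Q) p - lsum (map (\<lambda>Y. (1, (Y, Q))) [X]) p) = (\<lambda>_. 0)"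
      by (simp add: lsum_Cons lsum_Nil)
    then show ?thesis using C by (intro exI[of _ "[X]"]) (simp add: zspan.zero)
  next
    case S
    obtain A where A: "A \<subset> fst X" "A \<noteq> {}" "zset_decomp X A (fst X - A)"
      using zset_split[OF less.prems(1) S] by blast
    have dd: "snd X ` A = A" "snd X ` (fst X - A) = fst X - A" using A(3) by (auto simp: zset_decomp_def)
    have zA: "is_zset (A, snd X)" using sub_zset[OF less.prems(1) dd(1)] A(1) by blast
    have zB: "is_zset (fst X - A, snd X)" using sub_zset[OF less.prems(1) dd(2)] by blast
    have cA: "card (fst (A, snd X)) < card (fst X)" using psubset_card_mono[OF b(2) A(1)] by simp
    have "fst X - A \<subset> fst X" using A(1,2) by blast
    then have cB: "card (fst (fst X - A, snd X)) < card (fst X)" using psubset_card_mono[OF b(2)] by simp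
    obtain xa where xa: "\<forall>Y\<in>set xa. zcyc Y" "(\<lambda>p. gen ((A, snd X), Q) p - lsum (map (\<lambda>Y. (1, (Y, Q))) xa) p) \<in> zspan tensor_rels"
      using less.hyps[OF cA zA less.prems(2)] by auto
    obtain xb where xb: "\<forall>Y\<in>set xb. zcyc Y" "(\<lambda>p. gen ((fst X - A, snd X), Q) p - lsum (map (\<lambda>Y. (1, (Y, Q))) xb) p) \<in> zspan tensor_rels"
      using less.hyps[OF cB zB less.prems(2)] by auto
    have "(\<lambda>p. gen (X, Q) p - (lsum (map (\<lambda>Y. (1, (Y, Q))) xa) p + lsum (map (\<lambda>Y. (1, (Y, Q))) xb) p)) \<in> zspan tensor_rels"
      by (rule combine3[OF zspan_base[OF tdecX[OF less.prems(1) A(3) less.prems(2)]] xa(2) xb(2)])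
    then have "(\<lambda>p. gen (X, Q) p - lsum (map (\<lambda>Y. (1, (Y, Q))) (xa @ xb)) p) \<in> zspan tensor_rels"
      by (simp add: lsum_append)
    then show ?thesis using xa(1) xb(1) by (intro exI[of _ "xa @ xb"]) auto
  qed
qed

lemma A2:
  "finite_quandle Q \<Longrightarrow> is_zset X \<Longrightarrow> \<exists>qs. (\<forall>P\<in>set qs. conn P \<and> finite_quandle P) \<and>
     (\<lambda>p. gen (X, Q) p - lsum (map (\<lambda>P. (1, (X, P))) qs) p) \<in> zspan tensor_rels"
proof (induction "card (fst Q)" arbitrary: Q rule: less_induct)
  case less
  have fQ: "finite (fst Q)" using less.prems(1) by (simp add: finite_quandle_def)
  have bQ: "\<And>k. k \<in> fst Q \<Longrightarrow> bij_betw (snd Q k) (fst Q) (fst Q)"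
    using less.prems(1) by (auto simp: finite_quandle_def is_quandle_def is_rack_def)
  consider (E) "fst Q = {}" | (C) "conn Q" | (S) "fst Q \<noteq> {}" "\<not> conn Q" by blast
  then show ?case
  proof cases
    case E
    have d: "rack_decomp Q {} (fst Q)" using E unfolding rack_decomp_def is_subrack_def by simp
    have QQ: "({}, snd Q) = Q" "(fst Q, snd Q) = Q" using E by (metis prod.collapse)+
    have "(\<lambda>p. gen (X, Q) p - gen (X, Q) p - gen (X, Q) p) \<in> zspan tensor_rels"
      using zspan_base[OF tdecQ[OF less.prems(2) less.prems(1) d]] unfolding QQ .
    then have "(\<lambda>p. (-1) * (gen (X, Q) p - gen (X, Q) p - gen (X, Q) p)) \<in> zspan tensor_rels"
      by (rule zspan_smult)
    then have "(\<lambda>p. gen (X, Q) p - lsum (map (\<lambda>P. (1, (X, P))) []) p) \<in> zspan tensor_rels"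
      by (simp add: lsum_Nil)
    then show ?thesis by (intro exI[of _ "[]"]) simp
  next
    case C
    have "(\<lambda>p. gen (X, Q) p - lsum (map (\<lambda>P. (1, (X, P))) [Q]) p) = (\<lambda>_. 0)"
      by (simp add: lsum_Cons lsum_Nil)
    then show ?thesis using C less.prems(1) by (intro exI[of _ "[Q]"]) (simp add: zspan.zero)
  next
    case S
    obtain A where A: "A \<subset> fst Q" "A \<noteq> {}" "rack_decomp Q A (fst Q - A)"
      using quandle_split[OF less.prems(1) S] by blast
    have sA: "is_subrack A Q" "is_subrack (fst Q - A) Q" using A(3) by (auto simp: rack_decomp_def)
    have qA: "finite_quandle (A, snd Q)" by (rule sub_quandle[OF less.prems(1) sA(1)])
    have qB: "finite_quandle (fst Q - A, snd Q)" by (rule sub_quandle[OF less.prems(1) sA(2)])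
    have cA: "card (fst (A, snd Q)) < card (fst Q)" using psubset_card_mono[OF fQ A(1)] by simp
    have "fst Q - A \<subset> fst Q" using A(1,2) by blast
    then have cB: "card (fst (fst Q - A, snd Q)) < card (fst Q)" using psubset_card_mono[OF fQ] by simp
    obtain qa where qa: "\<forall>P\<in>set qa. conn P \<and> finite_quandle P" "(\<lambda>p. gen (X, (A, snd Q)) p - lsum (map (\<lambda>P. (1, (X, P))) qa) p) \<in> zspan tensor_rels"
      using less.hyps[OF cA qA less.prems(2)] by auto
    obtain qb where qb: "\<forall>P\<in>set qb. conn P \<and> finite_quandle P" "(\<lambda>p. gen (X, (fst Q - A, snd Q)) p - lsum (map (\<lambda>P. (1, (X, P))) qb) p) \<in> zspan tensor_rels"
      using less.hyps[OF cB qB less.prems(2)] by auto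
    have "(\<lambda>p. gen (X, Q) p - (lsum (map (\<lambda>P. (1, (X, P))) qa) p + lsum (map (\<lambda>P. (1, (X, P))) qb) p)) \<in> zspan tensor_rels"
      by (rule combine3[OF zspan_base[OF tdecQ[OF less.prems(2) less.prems(1) A(3)]] qa(2) qb(2)])
    then have "(\<lambda>p. gen (X, Q) p - lsum (map (\<lambda>P. (1, (X, P))) (qa @ qb)) p) \<in> zspan tensor_rels"
      by (simp add: lsum_append)
    then show ?thesis using qa(1) qb(1) by (intro exI[of _ "qa @ qb"]) auto
  qed
qed



lemma A12aux:
  "(\<forall>Y\<in>set xs. zcyc Y) \<Longrightarrow> finite_quandle Q \<Longrightarrow> \<exists>ts. (\<forall>t\<in>set ts. good t) \<and>
     (\<lambda>p. lsum (map (\<lambda>Y. (1, (Y, Q))) xs) p - lsum ts p) \<in> zspan tensor_rels"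
proof (induction xs)
  case Nil
  have "(\<lambda>p. lsum (map (\<lambda>Y. (1::int, (Y, Q))) []) p - lsum ([]::(int \<times> zs \<times> rk) list) p) = (\<lambda>_. 0)"
    by (simp add: lsum_Nil)
  then show ?case by (intro exI[of _ "[]"]) (simp add: zspan.zero)
next
  case (Cons Y xs)
  obtain ts where ts: "\<forall>t\<in>set ts. good t" "(\<lambda>p. lsum (map (\<lambda>Y. (1, (Y, Q))) xs) p - lsum ts p) \<in> zspan tensor_rels"
    using Cons by auto
  have Y: "zcyc Y" "is_zset Y" using Cons.prems(1) unfolding zcyc_def by simp_all
  obtain qs where qs: "\<forall>P\<in>set qs. conn P \<and> finite_quandle P" "(\<lambda>p. gen (Y, Q) p - lsum (map (\<lambda>P. (1, (Y, P))) qs) p) \<in> zspan tensor_rels"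
    using A2[OF Cons.prems(2) Y(2)] by blast
  let ?ts = "map (\<lambda>P. (1, (Y, P))) qs @ ts"
  have g: "\<forall>t\<in>set ?ts. good t" using ts(1) qs(1) Y(1) by (auto simp: good_def)
  have "(\<lambda>p. (gen (Y, Q) p - lsum (map (\<lambda>P. (1, (Y, P))) qs) p) + (lsum (map (\<lambda>Y. (1, (Y, Q))) xs) p - lsum ts p)) \<in> zspan tensor_rels"
    by (rule zspan_add[OF ts(2) qs(2)])
  then have "(\<lambda>p. lsum (map (\<lambda>Y. (1, (Y, Q))) (Y # xs)) p - lsum ?ts p) \<in> zspan tensor_rels"
    by (simp add: lsum_Cons lsum_append algebra_simps)
  then show ?case using g by blast
qed

lemma A12:
  assumes "is_zset X" "finite_quandle Q"
  shows "\<exists>ts. (\<forall>t\<in>set ts. good t) \<and> (\<lambda>p. gen (X, Q) p - lsum ts p) \<in> zspan tensor_rels"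
proof -
  obtain xs where xs: "\<forall>Y\<in>set xs. zcyc Y" "(\<lambda>p. gen (X, Q) p - lsum (map (\<lambda>Y. (1, (Y, Q))) xs) p) \<in> zspan tensor_rels"
    using A1[OF assms] by blast
  obtain ts where ts: "\<forall>t\<in>set ts. good t" "(\<lambda>p. lsum (map (\<lambda>Y. (1, (Y, Q))) xs) p - lsum ts p) \<in> zspan tensor_rels"
    using A12aux[OF xs(1) assms(2)] by blast
  have "(\<lambda>p. (gen (X, Q) p - lsum (map (\<lambda>Y. (1, (Y, Q))) xs) p) + (lsum (map (\<lambda>Y. (1, (Y, Q))) xs) p - lsum ts p)) \<in> zspan tensor_rels"
    by (rule zspan_add[OF ts(2) xs(2)])
  then show ?thesis using ts(1) by (intro exI[of _ ts]) simp
qed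

lemma stepA_set:
  "finite F \<Longrightarrow> F \<subseteq> tensor_gens \<Longrightarrow> \<exists>ts. (\<forall>t\<in>set ts. good t) \<and>
     (\<lambda>p. (\<Sum>x\<in>F. c x * gen x p) - lsum ts p) \<in> zspan tensor_rels"
proof (induction F rule: finite_induct)
  case empty
  have "(\<lambda>p. (\<Sum>x\<in>{}. c x * gen x p) - lsum ([]::(int \<times> zs \<times> rk) list) p) = (\<lambda>_. 0)"
    by (simp add: lsum_Nil)
  then show ?case by (intro exI[of _ "[]"]) (simp add: zspan.zero)
next
  case (insert x F)
  obtain ts where ts: "\<forall>t\<in>set ts. good t" "(\<lambda>p. (\<Sum>x\<in>F. c x * gen x p) - lsum ts p) \<in> zspan tensor_rels"
    using insert by auto
  obtain X Q where x: "x = (X, Q)" by (cases x)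
  have "(X, Q) \<in> tensor_gens" using insert.prems x by auto
  then have XQ: "is_zset X" "finite_quandle Q" by (auto simp: tensor_gens_def)
  obtain us where us: "\<forall>t\<in>set us. good t" "(\<lambda>p. gen x p - lsum us p) \<in> zspan tensor_rels"
    using A12[OF XQ] x by blast
  let ?ts = "map (\<lambda>t. (c x * fst t, snd t)) us @ ts"
  have g: "\<forall>t\<in>set ?ts. good t" using ts(1) us(1) by (auto simp: good_def)
  have "(\<lambda>p. (\<Sum>x\<in>F. c x * gen x p) - lsum ts p + c x * (gen x p - lsum us p)) \<in> zspan tensor_rels"
    by (rule zspan_add[OF zspan_smult[OF us(2)] ts(2)])
  then have "(\<lambda>p. (\<Sum>x\<in>insert x F. c x * gen x p) - lsum ?ts p) \<in> zspan tensor_rels"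
    using insert(1,2) by (simp only: lsum_append lsum_scale sum.insert) (simp add: algebra_simps)
  then show ?case using g by blast
qed

lemma stepA:
  assumes c: "c \<in> FS tensor_gens"
  shows "\<exists>ts. (\<forall>t\<in>set ts. good t) \<and> (\<lambda>p. c p - lsum ts p) \<in> zspan tensor_rels"
proof -
  have fc: "fin c" using c by (auto simp: FS_def fin_def fsupp_def)
  have F: "finite (fsupp c)" "fsupp c \<subseteq> tensor_gens" using c unfolding FS_def fsupp_def by blast+
  obtain ts where ts: "\<forall>t\<in>set ts. good t" "(\<lambda>p. (\<Sum>x\<in>fsupp c. c x * gen x p) - lsum ts p) \<in> zspan tensor_rels"
    using stepA_set[OF F] by blast
  have e: "c p = (\<Sum>x\<in>fsupp c. c x * gen x p)" for p using fun_cong[OF fin_repr[OF fc], of p] by simp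
  have "(\<lambda>p. c p - lsum ts p) = (\<lambda>p. (\<Sum>x\<in>fsupp c. c x * gen x p) - lsum ts p)"
    by (rule ext) (subst e, rule refl)
  then show ?thesis using ts by (intro exI[of _ ts]) simp
qed

lemma part4:
  assumes c: "c \<in> FS tensor_gens" and bm: "burnside_map c \<in> zspan rack_rels"
  shows "c \<in> zspan tensor_rels"
proof -
  have fc: "fin c" using c by (auto simp: FS_def fin_def fsupp_def)
  obtain ts where ts: "\<forall>t\<in>set ts. good t" "(\<lambda>p. c p - lsum ts p) \<in> zspan tensor_rels"
    using stepA[OF c] by blast
  have "linext bphi (\<lambda>p. c p - lsum ts p) \<in> zspan rack_rels" by (rule part1[OF ts(2)])
  then have d: "(\<lambda>y. linext bphi c y - linext bphi (lsum ts) y) \<in> zspan rack_rels"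
    using linext_diff[OF fc fin_lsum[of ts], of bphi] by simp
  have "(\<lambda>y. linext bphi c y - (linext bphi c y - linext bphi (lsum ts) y)) \<in> zspan rack_rels"
    by (rule zspan_diff[OF bm[unfolded bm_def'] d])
  then have "linext bphi (lsum ts) \<in> zspan rack_rels" by simp
  then have l: "lsum ts \<in> zspan tensor_rels" by (rule stepB[OF ts(1)])
  have "(\<lambda>p. lsum ts p + (c p - lsum ts p)) \<in> zspan tensor_rels" by (rule zspan_add[OF ts(2) l])
  then show ?thesis by simp
qed

theorem corollary7p13:
  shows "(\<forall>c \<in> FS tensor_gens. c \<in> zspan tensor_rels \<longrightarrow> burnside_map c \<in> zspan rack_rels)
    \<and> (\<forall>c \<in> FS tensor_gens. \<forall>d \<in> FS tensor_gens.
         (\<lambda>x. burnside_map (conv tensor_mult c d) x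
              - conv rack_prod (burnside_map c) (burnside_map d) x) \<in> zspan rack_rels)
    \<and> (\<lambda>x. burnside_map (gen (zset_one, rack_one)) x - gen rack_one x) \<in> zspan rack_rels
    \<and> (\<forall>c \<in> FS tensor_gens. burnside_map c \<in> zspan rack_rels \<longrightarrow> c \<in> zspan tensor_rels)"
  using part1 part2 part3 part4 by (simp add: bm_def')


end
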